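(* Fix $\delta\in(0,1)$, $\sigma>0$, $s\in[p]$ and $u>0$. There exists $\lambda_0>0$ depending only on $\delta$ and $u$ such that for every $\lambda\geq\lambda_0$ the following holds. Let $P_0\in\mathcal{P}_0(p,n,u,\sigma)$ and $P\in\mathcal{P}(p,n,s,u,\sigma,\rho)$, where $\rho\geq C\{s\log(ep/s)\vee\log\log(8n)\}$ for some $C\geq 8\lambda^2$, and suppose that the changepoint location $t_0$ and the pre- and post-change covariance matrices $\Sigma_1,\Sigma_2$ of the $X_i$ under $P$ additionally satisfy $$\min(t_0,n-t_0)\frac{\|\Sigma_1-\Sigma_2\|_{\mathrm{op}}^2}{\sigma^4}\geq C\{s\log(ep/s)\vee\log\log(8n)\}.$$ Then $\mathbb{E}_{P_0}\psi_\lambda(X)+\mathbb{E}_P(1-\psi_\lambda(X))\leq\delta$.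
   Context: Let $n\geq2$, $p\geq1$. For a real random variable $Y$, $\|Y\|_{\Psi_2}=\inf\{t>0:\ \mathbb{E}\exp(Y^2/t^2)\leq2\}$; for $\mathbb{R}^p$-valued $Y$, $\|Y\|_{\Psi_2}=\sup_{v\in S^{p-1}}\|v^\top Y\|_{\Psi_2}$. $S^{p-1}_s=\{v\in S^{p-1}:\|v\|_0\leq s\}$; for symmetric $A$, $\lambda^s_{\max}(A)=\sup_{v\in S^{p-1}_s}|v^\top Av|$. $M(p,s)$ is the set of symmetric $A$ with $\lambda^s_{\max}(A)=\|A\|_{\mathrm{op}}$; $\mathrm{PD}(p)$ the symmetric positive definite $p\times p$ matrices. $\mathcal{P}(u)$: distributions of $X=(X_1^\top,\ldots,X_n^\top)^\top$ with independent mean-zero $X_i$ and $\|X_i\|_{\Psi_2}^2\leq u\|\mathbb{E}X_iX_i^\top\|_{\mathrm{op}}$. $\mathcal{P}_0(p,n,u,\sigma)$: those $P\in\mathcal{P}(u)$ with $\mathbb{E}X_iX_i^\top=\Sigma$ for all $i$, some $\Sigma\in\mathrm{PD}(p)$ with $\|\Sigma\|_{\mathrm{op}}=\sigma^2$. $\mathcal{P}(p,n,s,u,\sigma,\rho)$: those $P\in\mathcal{P}(u)$ for which there are $t_0\in[n-1]$ and $\Sigma_1,\Sigma_2\in\mathrm{PD}(p)$ with $\mathbb{E}X_iX_i^\top=\Sigma_1$ for $i\leq t_0$, $=\Sigma_2$ for $i>t_0$, $\|\Sigma_1\|_{\mathrm{op}}\vee\|\Sigma_2\|_{\mathrm{op}}\leq\sigma^2$,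 $\Sigma_1-\Sigma_2\in M(p,s)$ and $\min(t_0,n-t_0)[(\frac{D}{\sigma^2-D})\wedge(\frac{D}{\sigma^2-D})^2]=\rho$ with $D=\|\Sigma_1-\Sigma_2\|_{\mathrm{op}}$. Test: $\mathcal{T}=\{2^0,\ldots,2^{\lfloor\log_2(n/2)\rfloor}\}$; $\widehat\Sigma_{1,t}=t^{-1}\sum_{i=1}^tX_iX_i^\top$, $\widehat\Sigma_{2,t}=t^{-1}\sum_{i=1}^tX_{n-i+1}X_{n-i+1}^\top$; $S_{t,s}=\lambda^s_{\max}(\widehat\Sigma_{1,t}-\widehat\Sigma_{2,t})$; with $\gamma=s\log(ep/s)\vee\log\log(8n)$, $r(p,n,s,t)=\sqrt{\gamma/t}\vee\gamma/t$; and $\psi_\lambda(X)=\max_{t\in\mathcal{T}}\mathbb{1}\{S_{t,s}>\lambda\sigma^2r(p,n,s,t)\}$. *)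

theory Defs
  imports "HOL-Analysis.Analysis" "HOL-Probability.Probability"
begin

text \<open>Vectors in R^p are functions nat => real whose coordinates j < p are
the meaningful ones; p x p matrices are functions nat => nat => real whose entries
j, k < p are the meaningful ones. A data set X = (X_1,...,X_n) is a function
x :: nat => nat => real, where x i j is coordinate j (j < p) of X_i (1 <= i <= n).
A distribution of X is a probability measure on (nat => nat => real) with its Borel
sigma-algebra (product topology), concentrated on the coordinates i in {1..n}, j < p.\<close>

type_synonym data = "nat \<Rightarrow> nat \<Rightarrow> real"

definition vnorm :: "nat \<Rightarrow> (nat \<Rightarrow> real) \<Rightarrow> real" where
  "vnorm p v = sqrt (\<Sum>j<p. (v j)\<^sup>2)"

definition sphere_p :: "nat \<Rightarrow> (nat \<Rightarrow> real) set" where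
  "sphere_p p = {v. vnorm p v = 1 \<and> (\<forall>j\<ge>p. v j = 0)}"

definition sparse_sphere :: "nat \<Rightarrow> nat \<Rightarrow> (nat \<Rightarrow> real) set" where
  "sparse_sphere p s = {v \<in> sphere_p p. card {j. j < p \<and> v j \<noteq> 0} \<le> s}"

definition matvec :: "nat \<Rightarrow> (nat \<Rightarrow> nat \<Rightarrow> real) \<Rightarrow> (nat \<Rightarrow> real) \<Rightarrow> (nat \<Rightarrow> real)" where
  "matvec p A v = (\<lambda>i. if i < p then (\<Sum>j<p. A i j * v j) else 0)"

definition quadf :: "nat \<Rightarrow> (nat \<Rightarrow> nat \<Rightarrow> real) \<Rightarrow> (nat \<Rightarrow> real) \<Rightarrow> real" where
  "quadf p A v = (\<Sum>i<p. \<Sum>j<p. v i * A i j * v j)"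

definition op_norm :: "nat \<Rightarrow> (nat \<Rightarrow> nat \<Rightarrow> real) \<Rightarrow> real" where
  "op_norm p A = Sup ((\<lambda>v. vnorm p (matvec p A v)) ` sphere_p p)"

definition lam_smax :: "nat \<Rightarrow> nat \<Rightarrow> (nat \<Rightarrow> nat \<Rightarrow> real) \<Rightarrow> real" where
  "lam_smax p s A = Sup ((\<lambda>v. \<bar>quadf p A v\<bar>) ` sparse_sphere p s)"

definition symm :: "nat \<Rightarrow> (nat \<Rightarrow> nat \<Rightarrow> real) \<Rightarrow> bool" where
  "symm p A \<longleftrightarrow> (\<forall>i<p. \<forall>j<p. A i j = A j i)"

definition Mset :: "nat \<Rightarrow> nat \<Rightarrow> (nat \<Rightarrow> nat \<Rightarrow> real) set" where
  "Mset p s = {A. symm p A \<and> lam_smax p s A = op_norm p A}"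

definition PD :: "nat \<Rightarrow> (nat \<Rightarrow> nat \<Rightarrow> real) set" where
  "PD p = {A. symm p A \<and> (\<forall>v. (\<forall>j\<ge>p. v j = 0) \<and> (\<exists>j<p. v j \<noteq> 0) \<longrightarrow> quadf p A v > 0)}"

text \<open>Psi_2 (sub-Gaussian Orlicz) norm of a real random variable; value in ennreal,
  with Inf {} = infinity.\<close>
definition psi2 :: "'a measure \<Rightarrow> ('a \<Rightarrow> real) \<Rightarrow> ennreal" where
  "psi2 M Y = Inf {ennreal t | t. t > 0 \<and>
      (\<integral>\<^sup>+ w. ennreal (exp ((Y w)\<^sup>2 / t\<^sup>2)) \<partial>M) \<le> 2}"

definition psi2_vec :: "nat \<Rightarrow> 'a measure \<Rightarrow> ('a \<Rightarrow> nat \<Rightarrow> real) \<Rightarrow> ennreal" where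
  "psi2_vec p M Y = Sup ((\<lambda>v. psi2 M (\<lambda>w. \<Sum>j<p. v j * Y w j)) ` sphere_p p)"

definition cov :: "data measure \<Rightarrow> nat \<Rightarrow> nat \<Rightarrow> nat \<Rightarrow> real" where
  "cov P i = (\<lambda>j k. \<integral>x. x i j * x i k \<partial>P)"

definition mat_eq :: "nat \<Rightarrow> (nat \<Rightarrow> nat \<Rightarrow> real) \<Rightarrow> (nat \<Rightarrow> nat \<Rightarrow> real) \<Rightarrow> bool" where
  "mat_eq p A B \<longleftrightarrow> (\<forall>j<p. \<forall>k<p. A j k = B j k)"

definition is_data_dist :: "nat \<Rightarrow> nat \<Rightarrow> data measure \<Rightarrow> bool" where
  "is_data_dist p n P \<longleftrightarrow> prob_space P \<and> sets P = sets borel \<and>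
     (AE x in P. \<forall>i j. (i \<notin> {1..n} \<or> p \<le> j) \<longrightarrow> x i j = 0)"

definition class_Pu :: "nat \<Rightarrow> nat \<Rightarrow> real \<Rightarrow> data measure \<Rightarrow> bool" where
  "class_Pu p n u P \<longleftrightarrow> is_data_dist p n P \<and>
     prob_space.indep_vars P (\<lambda>_. borel) (\<lambda>i x. x i) {1..n} \<and>
     (\<forall>i\<in>{1..n}. \<forall>j<p. integrable P (\<lambda>x. x i j) \<and> (\<integral>x. x i j \<partial>P) = 0) \<and>
     (\<forall>i\<in>{1..n}. (psi2_vec p P (\<lambda>x. x i))\<^sup>2 \<le> ennreal (u * op_norm p (cov P i)))"

definition class_P0 :: "nat \<Rightarrow> nat \<Rightarrow> real \<Rightarrow> real \<Rightarrow> data measure \<Rightarrow> bool" where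
  "class_P0 p n u \<sigma> P \<longleftrightarrow> class_Pu p n u P \<and>
     (\<exists>\<Sigma>\<in>PD p. op_norm p \<Sigma> = \<sigma>\<^sup>2 \<and> (\<forall>i\<in>{1..n}. mat_eq p (cov P i) \<Sigma>))"

text \<open>Membership of P in the alternative class P(p,n,s,u,sigma,rho), witnessed by the
  changepoint t0 and the pre/post-change covariance matrices Sigma1, Sigma2.\<close>
definition class_P1_wit :: "nat \<Rightarrow> nat \<Rightarrow> nat \<Rightarrow> real \<Rightarrow> real \<Rightarrow> real \<Rightarrow>
     nat \<Rightarrow> (nat \<Rightarrow> nat \<Rightarrow> real) \<Rightarrow> (nat \<Rightarrow> nat \<Rightarrow> real) \<Rightarrow> data measure \<Rightarrow> bool" where
  "class_P1_wit p n s u \<sigma> \<rho> t0 \<Sigma>1 \<Sigma>2 P \<longleftrightarrow> class_Pu p n u P \<and>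
     t0 \<in> {1..n-1} \<and> \<Sigma>1 \<in> PD p \<and> \<Sigma>2 \<in> PD p \<and>
     (\<forall>i\<in>{1..n}. i \<le> t0 \<longrightarrow> mat_eq p (cov P i) \<Sigma>1) \<and>
     (\<forall>i\<in>{1..n}. t0 < i \<longrightarrow> mat_eq p (cov P i) \<Sigma>2) \<and>
     max (op_norm p \<Sigma>1) (op_norm p \<Sigma>2) \<le> \<sigma>\<^sup>2 \<and>
     (\<lambda>j k. \<Sigma>1 j k - \<Sigma>2 j k) \<in> Mset p s \<and>
     (let D = op_norm p (\<lambda>j k. \<Sigma>1 j k - \<Sigma>2 j k)
      in real (min t0 (n - t0)) * min (D / (\<sigma>\<^sup>2 - D)) ((D / (\<sigma>\<^sup>2 - D))\<^sup>2) = \<rho>)"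

definition Tset :: "nat \<Rightarrow> nat set" where
  "Tset n = {2 ^ k | k. k \<le> nat \<lfloor>log 2 (real n / 2)\<rfloor>}"

definition Sig1hat :: "nat \<Rightarrow> data \<Rightarrow> nat \<Rightarrow> nat \<Rightarrow> real" where
  "Sig1hat t x = (\<lambda>j k. (\<Sum>i=1..t. x i j * x i k) / real t)"

definition Sig2hat :: "nat \<Rightarrow> nat \<Rightarrow> data \<Rightarrow> nat \<Rightarrow> nat \<Rightarrow> real" where
  "Sig2hat n t x = (\<lambda>j k. (\<Sum>i=1..t. x (n - i + 1) j * x (n - i + 1) k) / real t)"

definition Sstat :: "nat \<Rightarrow> nat \<Rightarrow> nat \<Rightarrow> nat \<Rightarrow> data \<Rightarrow> real" where
  "Sstat p n s t x = lam_smax p s (\<lambda>j k. Sig1hat t x j k - Sig2hat n t x j k)"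

definition gam :: "nat \<Rightarrow> nat \<Rightarrow> nat \<Rightarrow> real" where
  "gam p n s = max (real s * ln (exp 1 * real p / real s)) (ln (ln (8 * real n)))"

definition rate :: "nat \<Rightarrow> nat \<Rightarrow> nat \<Rightarrow> nat \<Rightarrow> real" where
  "rate p n s t = max (sqrt (gam p n s / real t)) (gam p n s / real t)"

definition psi_test :: "nat \<Rightarrow> nat \<Rightarrow> nat \<Rightarrow> real \<Rightarrow> real \<Rightarrow> data \<Rightarrow> real" where
  "psi_test p n s \<sigma> lam x =
     (if \<exists>t\<in>Tset n. Sstat p n s t x > lam * \<sigma>\<^sup>2 * rate p n s t then 1 else 0)"

end

theory Submission
  imports Defs
begin

definition nsq :: "nat \<Rightarrow> (nat \<Rightarrow> real) \<Rightarrow> real" where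
  "nsq p v = (\<Sum>j<p. (v j)\<^sup>2)"

definition bil :: "nat \<Rightarrow> (nat \<Rightarrow> nat \<Rightarrow> real) \<Rightarrow> (nat \<Rightarrow> real) \<Rightarrow> (nat \<Rightarrow> real) \<Rightarrow> real" where
  "bil p A x y = (\<Sum>i<p. \<Sum>j<p. x i * A i j * y j)"

lemma nsq_nonneg: "nsq p v \<ge> 0"
  unfolding nsq_def by (intro sum_nonneg) auto

lemma vnorm_nsq: "vnorm p v = sqrt (nsq p v)"
  unfolding vnorm_def nsq_def by simp

lemma quadf_bil: "quadf p A v = bil p A v v"
  unfolding quadf_def bil_def by simp

lemma bil_scale: "bil p A (\<lambda>j. a * x j) (\<lambda>j. b * y j) = a * b * bil p A x y"
  unfolding bil_def by (simp add: sum_distrib_left algebra_simps)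

lemma quadf_scale: "quadf p A (\<lambda>j. a * x j) = a\<^sup>2 * quadf p A x"
  unfolding quadf_bil bil_scale by (simp add: power2_eq_square)

lemma nsq_scale: "nsq p (\<lambda>j. a * x j) = a\<^sup>2 * nsq p x"
  unfolding nsq_def by (simp add: sum_distrib_left power_mult_distrib)

lemma bil_add_left: "bil p A (\<lambda>j. x j + y j) z = bil p A x z + bil p A y z"
  unfolding bil_def by (simp add: sum.distrib algebra_simps)
lemma bil_add_right: "bil p A z (\<lambda>j. x j + y j) = bil p A z x + bil p A z y"
  unfolding bil_def by (simp add: sum.distrib algebra_simps)
lemma bil_diff_left: "bil p A (\<lambda>j. x j - y j) z = bil p A x z - bil p A y z"
  unfolding bil_def by (simp add: sum_subtractf algebra_simps)
lemma bil_diff_right: "bil p A z (\<lambda>j. x j - y j) = bil p A z x - bil p A z y"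
  unfolding bil_def by (simp add: sum_subtractf algebra_simps)

lemma bil_symm: assumes "symm p A" shows "bil p A x y = bil p A y x"
proof -
  have "bil p A x y = (\<Sum>j<p. \<Sum>i<p. x i * A i j * y j)"
    unfolding bil_def by (rule sum.swap)
  also have "\<dots> = bil p A y x" unfolding bil_def
    using assms unfolding symm_def by (intro sum.cong refl) (auto simp: mult_ac)
  finally show ?thesis .
qed

lemma polar: assumes "symm p A"
  shows "4 * bil p A x y = quadf p A (\<lambda>j. x j + y j) - quadf p A (\<lambda>j. x j - y j)"
  unfolding quadf_bil bil_add_left bil_add_right bil_diff_left bil_diff_right
  using bil_symm[OF assms, of x y] by simp

lemma diff_quad: assumes "symm p A"
  shows "quadf p A v - quadf p A w = bil p A (\<lambda>j. v j - w j) (\<lambda>j. v j + w j)"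
  unfolding quadf_bil bil_add_left bil_add_right bil_diff_left bil_diff_right
  using bil_symm[OF assms, of v w] by simp

lemma parallelogram: "nsq p (\<lambda>j. x j + y j) + nsq p (\<lambda>j. x j - y j) = 2 * nsq p x + 2 * nsq p y"
  unfolding nsq_def by (simp add: sum.distrib[symmetric] sum_distrib_left power2_eq_square algebra_simps)

lemma nsq_zero: assumes "nsq p x = 0" "j < p" shows "x j = 0"
proof -
  have "(\<forall>j\<in>{..<p}. (x j)\<^sup>2 = 0)"
    using assms(1) unfolding nsq_def by (subst sum_nonneg_eq_0_iff[symmetric]) auto
  thus ?thesis using assms(2) by auto
qed

lemma bil_zero_left: assumes "\<And>j. j < p \<Longrightarrow> x j = 0" shows "bil p A x y = 0"
  unfolding bil_def using assms by simp

lemma bil_zero_right: assumes "\<And>j. j < p \<Longrightarrow> y j = 0" shows "bil p A x y = 0"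
  unfolding bil_def using assms by simp

lemma sphere_entry_le: assumes "v \<in> sphere_p p" "j < p" shows "\<bar>v j\<bar> \<le> 1"
proof -
  have n1: "nsq p v = 1" using assms(1) unfolding sphere_p_def vnorm_nsq by auto
  have "(v j)\<^sup>2 \<le> nsq p v" unfolding nsq_def
    using assms(2) by (intro member_le_sum) auto
  hence "(v j)\<^sup>2 \<le> 1\<^sup>2" using n1 by simp
  thus ?thesis by (simp add: abs_square_le_1)
qed

lemma quadf_sphere_bound: assumes "v \<in> sphere_p p"
  shows "\<bar>quadf p A v\<bar> \<le> (\<Sum>i<p. \<Sum>j<p. \<bar>A i j\<bar>)"
  unfolding quadf_def
proof -
  have "\<bar>\<Sum>i<p. \<Sum>j<p. v i * A i j * v j\<bar> \<le> (\<Sum>i<p. \<Sum>j<p. \<bar>v i * A i j * v j\<bar>)"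
    by (rule order_trans[OF sum_abs]) (intro sum_mono sum_abs)
  also have "\<dots> \<le> (\<Sum>i<p. \<Sum>j<p. \<bar>A i j\<bar>)"
  proof (intro sum_mono)
    fix i j assume "i \<in> {..<p}" "j \<in> {..<p}"
    hence "\<bar>v i\<bar> \<le> 1" "\<bar>v j\<bar> \<le> 1" using sphere_entry_le[OF assms] by auto
    hence "\<bar>v i\<bar> * \<bar>A i j\<bar> * \<bar>v j\<bar> \<le> 1 * \<bar>A i j\<bar> * 1"
      by (intro mult_mono) auto
    thus "\<bar>v i * A i j * v j\<bar> \<le> \<bar>A i j\<bar>" by (simp add: abs_mult)
  qed
  finally show "\<bar>\<Sum>i<p. \<Sum>j<p. v i * A i j * v j\<bar> \<le> (\<Sum>i<p. \<Sum>j<p. \<bar>A i j\<bar>)" .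
qed

lemma bdd_lam: "bdd_above ((\<lambda>v. \<bar>quadf p A v\<bar>) ` sparse_sphere p s)"
  by (rule bdd_aboveI2[where M="\<Sum>i<p. \<Sum>j<p. \<bar>A i j\<bar>"])
     (auto simp: sparse_sphere_def intro: quadf_sphere_bound)

lemma e0_sparse: assumes "1 \<le> p" "1 \<le> s"
  shows "(\<lambda>j. if j = 0 then 1 else 0) \<in> sparse_sphere p s"
proof -
  have "{j. j < p \<and> (if j = 0 then 1 else 0::real) \<noteq> 0} = {0}" using assms by auto
  moreover have "vnorm p (\<lambda>j. if j = 0 then 1 else 0::real) = 1"
  proof -
    have "(\<Sum>j<p. ((if j = 0 then 1 else 0::real))\<^sup>2) = (\<Sum>j<p. if j = 0 then 1 else 0)"
      by (intro sum.cong) auto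
    also have "\<dots> = 1" using assms by (simp add: sum.delta)
    finally show ?thesis unfolding vnorm_def by simp
  qed
  ultimately show ?thesis using assms unfolding sparse_sphere_def sphere_p_def by auto
qed

lemma sparse_ne: "1 \<le> p \<Longrightarrow> 1 \<le> s \<Longrightarrow> sparse_sphere p s \<noteq> {}"
  using e0_sparse by blast

lemma lam_ge: "v \<in> sparse_sphere p s \<Longrightarrow> \<bar>quadf p A v\<bar> \<le> lam_smax p s A"
  unfolding lam_smax_def by (rule cSUP_upper[OF _ bdd_lam])

lemma lam_nonneg: "1 \<le> p \<Longrightarrow> 1 \<le> s \<Longrightarrow> lam_smax p s A \<ge> 0"
  using lam_ge[OF e0_sparse] by (meson abs_ge_zero order_trans)

definition supp_in :: "nat set \<Rightarrow> (nat \<Rightarrow> real) \<Rightarrow> bool" where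
  "supp_in S x \<longleftrightarrow> (\<forall>j. j \<notin> S \<longrightarrow> x j = 0)"

lemma quad_le_lam:
  assumes "1 \<le> p" "1 \<le> s" "S \<subseteq> {..<p}" "card S \<le> s" "supp_in S x"
  shows "\<bar>quadf p A x\<bar> \<le> lam_smax p s A * nsq p x"
proof (cases "nsq p x = 0")
  case True
  hence "quadf p A x = 0" unfolding quadf_bil using nsq_zero[OF True] by (intro bil_zero_left) auto
  thus ?thesis using True by simp
next
  case False
  hence pos: "nsq p x > 0" using nsq_nonneg[of p x] by auto
  define c where "c = 1 / sqrt (nsq p x)"
  define v where "v = (\<lambda>j. c * x j)"
  have "nsq p v = c\<^sup>2 * nsq p x" unfolding v_def nsq_scale ..
  also have "\<dots> = 1" unfolding c_def using pos by (simp add: power_divide)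
  finally have nv: "nsq p v = 1" .
  have Sf: "finite S" using assms(3) finite_subset by blast
  have "{j. j < p \<and> v j \<noteq> 0} \<subseteq> S" using assms(5) unfolding supp_in_def v_def by auto
  hence "card {j. j < p \<and> v j \<noteq> 0} \<le> s" using card_mono[OF Sf] assms(4) by (meson order_trans)
  moreover have "\<forall>j\<ge>p. v j = 0" using assms(3,5) unfolding supp_in_def v_def by auto
  ultimately have vin: "v \<in> sparse_sphere p s"
    unfolding sparse_sphere_def sphere_p_def vnorm_nsq using nv by auto
  have "quadf p A v = c\<^sup>2 * quadf p A x" unfolding v_def quadf_scale ..
  hence "quadf p A x = nsq p x * quadf p A v" unfolding c_def using pos by (simp add: power_divide)
  hence "\<bar>quadf p A x\<bar> = nsq p x * \<bar>quadf p A v\<bar>" using pos by (simp add: abs_mult)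
  also have "\<dots> \<le> nsq p x * lam_smax p s A" using lam_ge[OF vin] pos by (intro mult_left_mono) auto
  finally show ?thesis by (simp add: mult.commute)
qed

lemma bil_le_lam:
  assumes "symm p A" "1 \<le> p" "1 \<le> s" "S \<subseteq> {..<p}" "card S \<le> s" "supp_in S x" "supp_in S y"
  shows "\<bar>bil p A x y\<bar> \<le> lam_smax p s A * sqrt (nsq p x * nsq p y)"
proof (cases "nsq p x = 0 \<or> nsq p y = 0")
  case True
  hence "bil p A x y = 0"
  proof (elim disjE)
    assume h: "nsq p x = 0" show ?thesis by (rule bil_zero_left, rule nsq_zero[OF h])
  next
    assume h: "nsq p y = 0" show ?thesis by (rule bil_zero_right, rule nsq_zero[OF h])
  qed
  moreover have "0 \<le> lam_smax p s A" using lam_nonneg[OF assms(2,3)] .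
  moreover have "0 \<le> sqrt (nsq p x * nsq p y)" by (simp add: nsq_nonneg)
  ultimately show ?thesis by simp
next
  case False
  have px: "nsq p x > 0" using False nsq_nonneg[of p x] by linarith
  have py: "nsq p y > 0" using False nsq_nonneg[of p y] by linarith
  define a where "a = sqrt (sqrt (nsq p y) / sqrt (nsq p x))"
  have apos: "a > 0" unfolding a_def using px py by simp
  have a2: "a\<^sup>2 = sqrt (nsq p y) / sqrt (nsq p x)" unfolding a_def using px py by simp
  define x' where "x' = (\<lambda>j. a * x j)"
  define y' where "y' = (\<lambda>j. (1/a) * y j)"
  have hb: "bil p A x' y' = bil p A x y" unfolding x'_def y'_def bil_scale using apos by simp
  have "4 * bil p A x y = quadf p A (\<lambda>j. x' j + y' j) - quadf p A (\<lambda>j. x' j - y' j)"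
    using polar[OF assms(1), of x' y'] unfolding hb .
  moreover have "supp_in S (\<lambda>j. x' j + y' j)" "supp_in S (\<lambda>j. x' j - y' j)"
    using assms(6,7) unfolding supp_in_def x'_def y'_def by auto
  ultimately have "\<bar>4 * bil p A x y\<bar> \<le> lam_smax p s A * nsq p (\<lambda>j. x' j + y' j) + lam_smax p s A * nsq p (\<lambda>j. x' j - y' j)"
    using quad_le_lam[OF assms(2-5)]
    by (smt (verit, best))
  also have "\<dots> = lam_smax p s A * (2 * nsq p x' + 2 * nsq p y')"
    unfolding distrib_left[symmetric] parallelogram ..
  also have "nsq p x' = a\<^sup>2 * nsq p x" unfolding x'_def nsq_scale ..
  also have "nsq p y' = (1/a)\<^sup>2 * nsq p y" unfolding y'_def nsq_scale ..
  also have "2 * (a\<^sup>2 * nsq p x) + 2 * ((1/a)\<^sup>2 * nsq p y) = 4 * sqrt (nsq p x * nsq p y)"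
  proof -
    have sx: "nsq p x = sqrt (nsq p x) * sqrt (nsq p x)" using px by simp
    have sy: "nsq p y = sqrt (nsq p y) * sqrt (nsq p y)" using py by simp
    have b2: "(1/a)\<^sup>2 = sqrt (nsq p x) / sqrt (nsq p y)" using a2 apos by (simp add: power_divide)
    have "a\<^sup>2 * nsq p x = sqrt (nsq p y) * sqrt (nsq p x)"
    proof -
      have "a\<^sup>2 * nsq p x = sqrt (nsq p y) * (nsq p x / sqrt (nsq p x))" unfolding a2 by simp
      also have "nsq p x / sqrt (nsq p x) = sqrt (nsq p x)" using px by (simp add: real_div_sqrt)
      finally show ?thesis .
    qed
    moreover have "(1/a)\<^sup>2 * nsq p y = sqrt (nsq p y) * sqrt (nsq p x)"
    proof -
      have "(1/a)\<^sup>2 * nsq p y = sqrt (nsq p x) * (nsq p y / sqrt (nsq p y))" unfolding b2 by simp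
      also have "nsq p y / sqrt (nsq p y) = sqrt (nsq p y)" using py by (simp add: real_div_sqrt)
      finally show ?thesis by simp
    qed
    ultimately show ?thesis by (simp add: real_sqrt_mult)
  qed
  finally show ?thesis by (simp add: abs_mult)
qed

definition trunc :: "real \<Rightarrow> int" where
  "trunc r = (if r \<ge> 0 then \<lfloor>r\<rfloor> else \<lceil>r\<rceil>)"

lemma trunc_abs: "\<bar>real_of_int (trunc r)\<bar> \<le> \<bar>r\<bar>"
proof (cases "r \<ge> 0")
  case True
  have "real_of_int \<lfloor>r\<rfloor> \<le> r" "0 \<le> \<lfloor>r\<rfloor>" using True floor_correct[of r] by auto
  thus ?thesis using True unfolding trunc_def by simp
next
  case False
  have "r \<le> real_of_int \<lceil>r\<rceil>" "\<lceil>r\<rceil> \<le> 0" using False ceiling_correct[of r] by auto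
  thus ?thesis using False unfolding trunc_def by simp
qed

lemma trunc_diff: "\<bar>r - real_of_int (trunc r)\<bar> < 1"
proof (cases "r \<ge> 0")
  case True
  have "r < real_of_int \<lfloor>r\<rfloor> + 1" "real_of_int \<lfloor>r\<rfloor> \<le> r" using floor_correct[of r] by auto
  moreover have t: "trunc r = \<lfloor>r\<rfloor>" using True unfolding trunc_def by simp
  ultimately show ?thesis unfolding t abs_less_iff by linarith
next
  case False
  have "real_of_int \<lceil>r\<rceil> - 1 < r" "r \<le> real_of_int \<lceil>r\<rceil>" using ceiling_correct[of r] by auto
  moreover have t: "trunc r = \<lceil>r\<rceil>" using False unfolding trunc_def by simp
  ultimately show ?thesis unfolding t abs_less_iff by linarith
qed

lemma trunc_0: "trunc 0 = 0" unfolding trunc_def by simp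

definition Zset :: "nat \<Rightarrow> nat \<Rightarrow> (nat \<Rightarrow> int) set" where
  "Zset p s = {z. (\<forall>j\<ge>p. z j = 0) \<and> (\<Sum>j<p. (z j)\<^sup>2) \<le> 16 * int s}"

definition zv :: "nat \<Rightarrow> (nat \<Rightarrow> int) \<Rightarrow> nat \<Rightarrow> real" where
  "zv s z = (\<lambda>j. real_of_int (z j) / (4 * sqrt (real s)))"

lemma net_approx:
  assumes "1 \<le> p" "1 \<le> s" "symm p A" "v \<in> sparse_sphere p s"
  shows "\<exists>z\<in>Zset p s. \<bar>quadf p A v\<bar> \<le> \<bar>quadf p A (zv s z)\<bar> + lam_smax p s A / 2"
proof -
  define L where "L = 4 * sqrt (real s)"
  have Lpos: "L > 0" unfolding L_def using assms(2) by simp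
  have L2: "L\<^sup>2 = 16 * real s" unfolding L_def by (simp add: power_mult_distrib)
  define z where "z = (\<lambda>j. if j < p then trunc (v j * L) else 0)"
  define w where "w = zv s z"
  have wj: "w j = real_of_int (z j) / L" for j unfolding w_def zv_def L_def by simp
  have vp: "\<forall>j\<ge>p. v j = 0" and nv: "nsq p v = 1"
    using assms(4) unfolding sparse_sphere_def sphere_p_def vnorm_nsq by auto
  define S where "S = {j. j < p \<and> v j \<noteq> 0}"
  have cS: "card S \<le> s" using assms(4) unfolding sparse_sphere_def S_def by auto
  have Ssub: "S \<subseteq> {..<p}" unfolding S_def by auto
  have zabs: "\<bar>real_of_int (z j)\<bar> \<le> \<bar>v j\<bar> * L" for j
    unfolding z_def using trunc_abs[of "v j * L"] Lpos by (auto simp: abs_mult)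
  have wabs: "\<bar>w j\<bar> \<le> \<bar>v j\<bar>" for j
    unfolding wj using zabs[of j] Lpos by (simp add: divide_le_eq abs_div)
  have z0: "v j = 0 \<Longrightarrow> z j = 0" for j unfolding z_def by (simp add: trunc_0)
  have w0: "v j = 0 \<Longrightarrow> w j = 0" for j using z0 wj by simp
  have "(\<Sum>j<p. real_of_int ((z j)\<^sup>2)) \<le> (\<Sum>j<p. (v j * L)\<^sup>2)"
  proof (intro sum_mono)
    fix j
    have "\<bar>real_of_int (z j)\<bar> \<le> \<bar>v j * L\<bar>" using zabs[of j] Lpos by (simp add: abs_mult)
    thus "real_of_int ((z j)\<^sup>2) \<le> (v j * L)\<^sup>2" using abs_le_square_iff by force
  qed
  also have "\<dots> = L\<^sup>2 * nsq p v" unfolding nsq_def by (simp add: sum_distrib_left power_mult_distrib mult_ac)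
  also have "\<dots> = 16 * real s" using nv L2 by simp
  finally have "real_of_int (\<Sum>j<p. (z j)\<^sup>2) \<le> real_of_int (16 * int s)" by simp
  hence zin: "z \<in> Zset p s" unfolding Zset_def z_def by (simp only: of_int_le_iff) auto
  define d where "d = (\<lambda>j. v j - w j)"
  define e where "e = (\<lambda>j. v j + w j)"
  have dS: "supp_in S d" and eS: "supp_in S e"
    unfolding supp_in_def d_def e_def S_def using vp w0 by (auto simp: not_less)
  have "nsq p d = (\<Sum>j\<in>S. (d j)\<^sup>2)"
    unfolding nsq_def using dS Ssub unfolding supp_in_def
    by (intro sum.mono_neutral_right) auto
  also have "\<dots> \<le> (\<Sum>j\<in>S. 1 / L\<^sup>2)"
  proof (intro sum_mono)
    fix j
    have "\<bar>v j * L - real_of_int (z j)\<bar> \<le> 1"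
      unfolding z_def using trunc_diff[of "v j * L"] vp by (auto simp: abs_mult not_less)
    moreover have "\<bar>d j\<bar> * L = \<bar>d j * L\<bar>" using Lpos by (simp add: abs_mult)
    moreover have "d j * L = v j * L - real_of_int (z j)" unfolding d_def wj using Lpos
      by (simp add: field_simps)
    ultimately have "\<bar>d j\<bar> * L \<le> 1" by simp
    hence "\<bar>d j\<bar> \<le> 1 / L" using Lpos by (simp add: le_divide_eq)
    hence "\<bar>d j\<bar> \<le> \<bar>1 / L\<bar>" using Lpos by simp
    hence "\<bar>d j\<bar>\<^sup>2 \<le> \<bar>1 / L\<bar>\<^sup>2" by (intro power_mono) auto
    thus "(d j)\<^sup>2 \<le> 1 / L\<^sup>2" by (simp add: power_divide)
  qed
  also have "\<dots> = card S / L\<^sup>2" by simp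
  also have "\<dots> \<le> real s / (16 * real s)" unfolding L2 using cS by (intro divide_right_mono) auto
  also have "\<dots> = 1 / 16" using assms(2) by simp
  finally have nd: "nsq p d \<le> 1 / 16" .
  have "nsq p e \<le> (\<Sum>j<p. 4 * (v j)\<^sup>2)"
    unfolding nsq_def
  proof (intro sum_mono)
    fix j
    have "\<bar>e j\<bar> \<le> \<bar>2 * v j\<bar>" unfolding e_def using wabs[of j] by simp
    thus "(e j)\<^sup>2 \<le> 4 * (v j)\<^sup>2" using abs_le_square_iff by (force simp: power_mult_distrib)
  qed
  also have "\<dots> = 4" using nv unfolding nsq_def by (simp add: sum_distrib_left[symmetric])
  finally have ne: "nsq p e \<le> 4" .
  have "\<bar>quadf p A v - quadf p A w\<bar> = \<bar>bil p A d e\<bar>"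
    unfolding diff_quad[OF assms(3)] d_def e_def ..
  also have "\<dots> \<le> lam_smax p s A * sqrt (nsq p d * nsq p e)"
    by (rule bil_le_lam[OF assms(3,1,2) Ssub cS dS eS])
  also have "\<dots> \<le> lam_smax p s A * sqrt (1/16 * 4)"
    using lam_nonneg[OF assms(1,2)] nd ne nsq_nonneg[of p d] nsq_nonneg[of p e]
    by (intro mult_left_mono real_sqrt_le_mono mult_mono) auto
  also have "sqrt (1/16 * 4 :: real) = 1/2"
    by (simp add: real_sqrt_divide)
  finally have "\<bar>quadf p A v - quadf p A w\<bar> \<le> lam_smax p s A / 2" by simp
  hence "\<bar>quadf p A v\<bar> \<le> \<bar>quadf p A (zv s z)\<bar> + lam_smax p s A / 2"
    unfolding w_def by linarith
  thus ?thesis using zin by blast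
qed

lemma net_exceed:
  assumes "1 \<le> p" "1 \<le> s" "symm p A" "lam_smax p s A > c"
  shows "\<exists>z\<in>Zset p s. \<bar>quadf p A (zv s z)\<bar> > c / 2"
proof (rule ccontr)
  assume H: "\<not> ?thesis"
  have "\<bar>quadf p A v\<bar> \<le> c / 2 + lam_smax p s A / 2" if "v \<in> sparse_sphere p s" for v
    using net_approx[OF assms(1-3) that] H by force
  hence "lam_smax p s A \<le> c / 2 + lam_smax p s A / 2"
    unfolding lam_smax_def by (intro cSUP_least sparse_ne assms(1,2)) (auto simp: lam_smax_def)
  thus False using assms(4) by linarith
qed

lemma pow_fact_le_exp: "0 \<le> (x::real) \<Longrightarrow> x ^ n / fact n \<le> exp x"
proof -
  assume x: "0 \<le> x"
  have sm: "summable (\<lambda>n. x ^ n /\<^sub>R fact n)"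
    using summable_exp_generic[of x] .
  have "(\<Sum>i\<in>{n}. x ^ i /\<^sub>R fact i) \<le> (\<Sum>i. x ^ i /\<^sub>R fact i)"
    by (rule sum_le_suminf[OF sm]) (use x in auto)
  thus ?thesis by (simp add: exp_def divide_inverse mult.commute)
qed

lemma choose_bound: assumes "0 < M" shows "real (N choose M) \<le> (exp 1 * N / M) ^ M"
proof -
  have "real (N choose M) * fact M \<le> real N ^ M"
  proof -
    have "(N choose M) * fact M \<le> N ^ M" by (rule binomial_fact_pow)
    hence "real ((N choose M) * fact M) \<le> real (N ^ M)" by (simp only: of_nat_le_iff)
    thus ?thesis by simp
  qed
  hence "real (N choose M) \<le> real N ^ M / fact M" by (simp add: field_simps)
  also have "\<dots> \<le> real N ^ M * (exp (real M) / real M ^ M)"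
  proof -
    have "real M ^ M / fact M \<le> exp (real M)" by (rule pow_fact_le_exp) simp
    hence "1 / fact M \<le> exp (real M) / real M ^ M" using assms by (simp add: field_simps)
    hence "real N ^ M * (1 / fact M) \<le> real N ^ M * (exp (real M) / real M ^ M)"
      by (intro mult_left_mono) auto
    thus ?thesis by simp
  qed
  also have "\<dots> = (exp 1 * N / M) ^ M"
    by (simp add: power_divide power_mult_distrib exp_of_nat_mult[symmetric])
  finally show ?thesis .
qed

definition zenc :: "nat \<Rightarrow> nat \<Rightarrow> (nat \<Rightarrow> int) \<Rightarrow> nat list" where
  "zenc p M z = map (\<lambda>j. nat (z j)) [0..<p] @ map (\<lambda>j. nat (- z j)) [0..<p] @ [M - (\<Sum>j<p. nat \<bar>z j\<bar>)]"

lemma abs_le_sq_int: "\<bar>x::int\<bar> \<le> x\<^sup>2"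
proof (cases "x = 0")
  case False
  hence "1 \<le> \<bar>x\<bar>" by linarith
  hence "\<bar>x\<bar> * 1 \<le> \<bar>x\<bar> * \<bar>x\<bar>" by (intro mult_left_mono) auto
  thus ?thesis by (simp add: power2_eq_square abs_mult[symmetric])
qed simp

lemma Zset_enc:
  assumes "z \<in> Zset p s"
  shows "zenc p (16 * s) z \<in> {l. length l = 2 * p + 1 \<and> sum_list l = 16 * s}"
proof -
  have zs: "(\<Sum>j<p. (z j)\<^sup>2) \<le> 16 * int s" using assms unfolding Zset_def by auto
  have "int (\<Sum>j<p. nat \<bar>z j\<bar>) = (\<Sum>j<p. \<bar>z j\<bar>)" by simp
  also have "\<dots> \<le> (\<Sum>j<p. (z j)\<^sup>2)" by (intro sum_mono abs_le_sq_int)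
  finally have le: "(\<Sum>j<p. nat \<bar>z j\<bar>) \<le> 16 * s" using zs by linarith
  have sl: "sum_list (map f [0..<p]) = (\<Sum>j<p. f j)" for f :: "nat \<Rightarrow> nat"
    by (simp add: sum_set_upt_conv_sum_list_nat[symmetric] atLeast0LessThan)
  have "(\<Sum>j<p. nat (z j)) + (\<Sum>j<p. nat (- z j)) = (\<Sum>j<p. nat \<bar>z j\<bar>)"
    by (simp add: sum.distrib[symmetric]) (intro sum.cong, auto)
  thus ?thesis unfolding zenc_def using le by (simp add: sl)
qed

lemma zenc_inj: "inj_on (zenc p M) (Zset p s)"
proof (rule inj_onI)
  fix z1 z2 assume z1: "z1 \<in> Zset p s" and z2: "z2 \<in> Zset p s" and eq: "zenc p M z1 = zenc p M z2"
  from eq have "map (\<lambda>j. nat (z1 j)) [0..<p] = map (\<lambda>j. nat (z2 j)) [0..<p] \<and>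
      map (\<lambda>j. nat (- z1 j)) [0..<p] = map (\<lambda>j. nat (- z2 j)) [0..<p]"
    unfolding zenc_def by (simp add: append_eq_append_conv)
  hence a: "\<forall>j<p. nat (z1 j) = nat (z2 j) \<and> nat (- z1 j) = nat (- z2 j)"
    by (simp add: map_eq_conv)
  show "z1 = z2"
  proof
    fix j show "z1 j = z2 j"
    proof (cases "j < p")
      case True
      hence "nat (z1 j) = nat (z2 j)" "nat (- z1 j) = nat (- z2 j)" using a by auto
      thus ?thesis by linarith
    next
      case False thus ?thesis using z1 z2 unfolding Zset_def by auto
    qed
  qed
qed

lemma lset_sub: "{l::nat list. length l = m \<and> sum_list l = N} \<subseteq> {l. set l \<subseteq> {0..N} \<and> length l = m}"
proof (rule subsetI)
  fix l assume l: "l \<in> {l::nat list. length l = m \<and> sum_list l = N}"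
  have "set l \<subseteq> {0..N}"
  proof
    fix x assume "x \<in> set l"
    then obtain k where k: "k < length l" "x = l ! k" by (auto simp: in_set_conv_nth)
    hence "x \<le> sum_list l" using elem_le_sum_list by blast
    thus "x \<in> {0..N}" using l by auto
  qed
  thus "l \<in> {l. set l \<subseteq> {0..N} \<and> length l = m}" using l by auto
qed

lemma Zset_finite: "finite (Zset p s)"
proof -
  have "finite {l::nat list. length l = 2 * p + 1 \<and> sum_list l = 16 * s}"
  proof (rule finite_subset[of _ "{l. set l \<subseteq> {0..16 * s} \<and> length l = 2 * p + 1}"])
    show "{l::nat list. length l = 2 * p + 1 \<and> sum_list l = 16 * s} \<subseteq> {l. set l \<subseteq> {0..16 * s} \<and> length l = 2 * p + 1}"
      by (rule lset_sub)
    show "finite {l. set l \<subseteq> {0..16 * s} \<and> length l = 2 * p + 1}"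
      by (rule finite_lists_length_eq) simp
  qed
  moreover have "zenc p (16 * s) ` Zset p s \<subseteq> {l. length l = 2 * p + 1 \<and> sum_list l = 16 * s}"
    using Zset_enc by blast
  ultimately show ?thesis using finite_imageD[OF _ zenc_inj] finite_subset by blast
qed

lemma Zset_card:
  assumes "1 \<le> s" "s \<le> p"
  shows "real (card (Zset p s)) \<le> (exp 1 * p / s) ^ (32 * s)"
proof -
  have "card (Zset p s) \<le> card {l::nat list. length l = 2 * p + 1 \<and> sum_list l = 16 * s}"
  proof (rule card_inj_on_le[OF zenc_inj])
    show "zenc p (16 * s) ` Zset p s \<subseteq> {l. length l = 2 * p + 1 \<and> sum_list l = 16 * s}"
      using Zset_enc by blast
    show "finite {l::nat list. length l = 2 * p + 1 \<and> sum_list l = 16 * s}"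
    proof (rule finite_subset[of _ "{l. set l \<subseteq> {0..16 * s} \<and> length l = 2 * p + 1}"])
      show "finite {l. set l \<subseteq> {0..16 * s} \<and> length l = 2 * p + 1}"
        by (rule finite_lists_length_eq) simp
    qed (rule lset_sub)
  qed
  also have "\<dots> = (16 * s + 2 * p) choose (16 * s)" by (simp add: card_length_sum_list)
  finally have c1: "real (card (Zset p s)) \<le> real ((16 * s + 2 * p) choose (16 * s))" by simp
  also have "\<dots> \<le> (exp 1 * real (16 * s + 2 * p) / real (16 * s)) ^ (16 * s)"
    by (rule choose_bound) (use assms in simp)
  also have "\<dots> \<le> ((exp 1 * p / s)\<^sup>2) ^ (16 * s)"
  proof (rule power_mono)
    have sp: "real s \<le> real p" "1 \<le> real s" using assms by auto
    have r1: "real (16 * s + 2 * p) / real (16 * s) \<le> 2 * p / s"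
      using sp by (simp add: field_simps)
    have r2: "2 \<le> exp 1 * p / s"
    proof -
      have "exp 1 \<ge> (2::real)" using exp_ge_add_one_self[of 1] by simp
      moreover have "p / s \<ge> (1::real)" using sp by simp
      ultimately show ?thesis using mult_mono[of 2 "exp 1" 1 "p/s"] by simp
    qed
    have "exp 1 * real (16 * s + 2 * p) / real (16 * s) \<le> exp 1 * (2 * p / s)"
      using r1 by (simp add: mult_left_mono times_divide_eq_right[symmetric] del: times_divide_eq_right of_nat_add of_nat_mult)
    also have "\<dots> = 2 * (exp 1 * p / s)" by simp
    also have "\<dots> \<le> (exp 1 * p / s) * (exp 1 * p / s)" using r2 by (intro mult_right_mono) auto
    finally show "exp 1 * real (16 * s + 2 * p) / real (16 * s) \<le> (exp 1 * p / s)\<^sup>2"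
      by (simp add: power2_eq_square)
    show "0 \<le> exp 1 * real (16 * s + 2 * p) / real (16 * s)" by simp
  qed
  also have "\<dots> = (exp 1 * p / s) ^ (32 * s)" by (simp add: power_mult[symmetric])
  finally show ?thesis .
qed

lemma Tset_img: "Tset n = (\<lambda>k. 2 ^ k) ` {..nat \<lfloor>log 2 (real n / 2)\<rfloor>}"
  unfolding Tset_def by auto

lemma Tset_finite: "finite (Tset n)" unfolding Tset_img by simp

lemma Tset_mem:
  assumes "2 \<le> n" "t \<in> Tset n" shows "1 \<le> t" "2 * t \<le> n"
proof -
  obtain k where t: "t = 2 ^ k" and k: "k \<le> nat \<lfloor>log 2 (real n / 2)\<rfloor>"
    using assms(2) unfolding Tset_def by auto
  show "1 \<le> t" unfolding t by simp
  have n2: "real n / 2 > 0" using assms by simp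
  have "real k \<le> log 2 (real n / 2)"
  proof -
    have "log 2 (real n / 2) \<ge> 0" using assms by simp
    hence "real (nat \<lfloor>log 2 (real n / 2)\<rfloor>) \<le> log 2 (real n / 2)" by linarith
    thus ?thesis using k by linarith
  qed
  hence "2 powr real k \<le> real n / 2" using le_log_iff[OF _ n2] by simp
  hence "real (2 ^ k) \<le> real n / 2" by (simp add: powr_realpow)
  thus "2 * t \<le> n" unfolding t by linarith
qed

lemma Tset_card:
  assumes "2 \<le> n" shows "real (card (Tset n)) \<le> 2 * ln (8 * real n)"
proof -
  let ?K = "nat \<lfloor>log 2 (real n / 2)\<rfloor>"
  have "card (Tset n) \<le> card {..?K}" unfolding Tset_img by (rule card_image_le) simp
  hence c: "real (card (Tset n)) \<le> real ?K + 1" by simp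
  have l0: "log 2 (real n / 2) \<ge> 0" using assms by simp
  have "real ?K \<le> log 2 (real n / 2)" using l0 by linarith
  also have "log 2 (real n / 2) = log 2 (real n) - 1" using assms by (simp add: log_divide)
  finally have "real (card (Tset n)) \<le> log 2 (real n)" using c by linarith
  also have "log 2 (real n) = ln (real n) / ln 2" by (simp add: log_def)
  also have "\<dots> \<le> ln (real n) / (2/3)"
    using ln2_ge_two_thirds assms by (intro divide_left_mono) auto
  also have "\<dots> \<le> 2 * ln (8 * real n)"
  proof -
    have "ln (real n) \<le> ln (8 * real n)" using assms by simp
    moreover have "ln (real n) \<ge> 0" using assms by simp
    ultimately show ?thesis by simp
  qed
  finally show ?thesis .
qed

lemma Tset_exists:
  assumes "1 \<le> m" "2 * m \<le> n" shows "\<exists>t\<in>Tset n. t \<le> m \<and> m < 2 * t"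
proof -
  define k where "k = nat \<lfloor>log 2 (real m)\<rfloor>"
  have "log 2 (real m) \<ge> 0" using assms by simp
  hence "\<lfloor>log 2 (real m)\<rfloor> = int k" unfolding k_def by simp
  hence km: "2 ^ k \<le> m \<and> m < 2 ^ (k + 1)"
    using floor_log_nat_eq_powr_iff[of 2 m k] assms by simp
  have "real k \<le> log 2 (real n / 2)"
  proof -
    have "2 * 2 ^ k \<le> n" using km assms by linarith
    hence "real (2 * 2 ^ k) \<le> real n" by (simp only: of_nat_le_iff)
    hence "2 ^ k \<le> real n / 2" by simp
    thus ?thesis using le_log_of_power[of 2 k "real n / 2"] by simp
  qed
  hence "int k \<le> \<lfloor>log 2 (real n / 2)\<rfloor>" by (simp add: le_floor_iff)
  hence "k \<le> nat \<lfloor>log 2 (real n / 2)\<rfloor>" by linarith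
  hence "2 ^ k \<in> Tset n" unfolding Tset_def by auto
  thus ?thesis using km by (intro bexI[of _ "2 ^ k"]) auto
qed

lemma ln_epS: assumes "1 \<le> s" "s \<le> p" shows "ln (exp 1 * real p / real s) \<ge> 1"
proof -
  have "exp 1 * real p / real s \<ge> exp 1" using assms by (simp add: field_simps)
  moreover have "exp 1 > (0::real)" by simp
  ultimately have "ln (exp 1 * real p / real s) \<ge> ln (exp 1)" by (subst ln_le_cancel_iff) linarith+
  thus ?thesis by simp
qed

lemma gam_ge:
  assumes "1 \<le> s" "s \<le> p" "2 \<le> n"
  shows "gam p n s \<ge> 1" "gam p n s \<ge> real s * ln (exp 1 * real p / real s)"
        "exp (gam p n s) \<ge> ln (8 * real n)"
proof -
  show g: "gam p n s \<ge> real s * ln (exp 1 * real p / real s)" unfolding gam_def by simp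
  have "real s * ln (exp 1 * real p / real s) \<ge> 1 * 1"
    using ln_epS[OF assms(1,2)] assms(1) by (intro mult_mono) auto
  thus "gam p n s \<ge> 1" using g by linarith
  have "gam p n s \<ge> ln (ln (8 * real n))" unfolding gam_def by simp
  hence "exp (gam p n s) \<ge> exp (ln (ln (8 * real n)))" by simp
  also have "exp (ln (ln (8 * real n))) = ln (8 * real n)" using assms(3) by simp
  finally show "exp (gam p n s) \<ge> ln (8 * real n)" .
qed

lemma exp_quad_bound: "exp (x::real) \<le> 1 + x + x\<^sup>2 * exp \<bar>x\<bar>"
proof (cases "x \<ge> 0")
  case True
  have h: "1 - x \<le> exp (- x)" using exp_ge_add_one_self[of "-x"] by simp
  have "(1 - x) * (1 + x) \<le> exp (- x) * (1 + x)" using h True by (intro mult_right_mono) auto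
  hence "exp x * ((1 - x) * (1 + x)) \<le> exp x * (exp (- x) * (1 + x))" by (intro mult_left_mono) auto
  also have "exp x * (exp (- x) * (1 + x)) = 1 + x" by (simp add: exp_minus field_simps)
  finally have "exp x - x\<^sup>2 * exp x \<le> 1 + x" by (simp add: algebra_simps power2_eq_square)
  thus ?thesis using True by simp
next
  case False
  define y where "y = - x"
  have y: "y > 0" using False y_def by simp
  have "exp (- y) \<le> 1 - y + y\<^sup>2"
  proof (cases "y \<ge> 1")
    case True
    have "exp (- y) \<le> 1" using y by simp
    moreover have "y \<le> y\<^sup>2" using True by (simp add: power2_eq_square)
    ultimately show ?thesis by linarith
  next
    case False
    have "1 + y \<le> exp y" by (rule exp_ge_add_one_self)
    hence "exp (- y) \<le> 1 / (1 + y)" using y by (simp add: exp_minus field_simps)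
    also have "1 / (1 + y) \<le> 1 - y + y\<^sup>2"
    proof -
      have "1 \<le> (1 - y + y\<^sup>2) * (1 + y)" using y by (simp add: algebra_simps power2_eq_square power3_eq_cube)
      thus ?thesis using y by (simp add: divide_le_eq)
    qed
    finally show ?thesis .
  qed
  moreover have "y\<^sup>2 * 1 \<le> y\<^sup>2 * exp \<bar>x\<bar>" by (intro mult_left_mono) auto
  ultimately show ?thesis unfolding y_def by simp
qed

lemma sq_exp_bound:
  fixes W m a :: real
  assumes "0 \<le> W" "0 \<le> m" "m \<le> 1" "\<bar>a\<bar> \<le> 1/8"
  shows "(a * (W - m))\<^sup>2 * exp \<bar>a * (W - m)\<bar> \<le> 16 * a\<^sup>2 * exp W"
proof -
  define z where "z = W + 1"
  have z1: "z \<ge> 1" using assms unfolding z_def by simp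
  have wm: "\<bar>W - m\<bar> \<le> z" using assms unfolding z_def by simp
  have A: "(a * (W - m))\<^sup>2 \<le> a\<^sup>2 * z\<^sup>2"
  proof -
    have "\<bar>W - m\<bar>\<^sup>2 \<le> z\<^sup>2" using wm by (intro power_mono) auto
    thus ?thesis by (simp add: power_mult_distrib mult_left_mono)
  qed
  have B: "exp \<bar>a * (W - m)\<bar> \<le> exp (z / 8)"
  proof -
    have "\<bar>a * (W - m)\<bar> = \<bar>a\<bar> * \<bar>W - m\<bar>" by (simp add: abs_mult)
    also have "\<dots> \<le> (1/8) * z" using assms(4) wm by (intro mult_mono) auto
    finally show ?thesis by simp
  qed
  have C: "z\<^sup>2 \<le> (256/49) * exp (7 * z / 8)"
  proof -
    have "1 + 7 * z / 16 \<le> exp (7 * z / 16)" by (rule exp_ge_add_one_self)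
    hence "7 * z / 16 \<le> exp (7 * z / 16)" by linarith
    hence "(7 * z / 16)\<^sup>2 \<le> (exp (7 * z / 16))\<^sup>2" using z1 by (intro power_mono) auto
    also have "(exp (7 * z / 16))\<^sup>2 = exp (7 * z / 8)" by (simp add: power2_eq_square exp_add[symmetric])
    finally show ?thesis by (simp add: power_divide power_mult_distrib)
  qed
  have "z\<^sup>2 * exp (z / 8) \<le> (256/49) * exp (7 * z / 8) * exp (z / 8)"
    using C by (intro mult_right_mono) auto
  also have "\<dots> = (256/49) * exp z" by (simp add: exp_add[symmetric])
  also have "exp z = exp 1 * exp W" unfolding z_def by (simp add: exp_add)
  also have "(256/49) * (exp 1 * exp W) \<le> (256/49) * (3 * exp W)"
    using exp_le by (intro mult_left_mono mult_right_mono) auto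
  also have "\<dots> \<le> 16 * exp W" by simp
  finally have D: "z\<^sup>2 * exp (z / 8) \<le> 16 * exp W" .
  have "(a * (W - m))\<^sup>2 * exp \<bar>a * (W - m)\<bar> \<le> (a\<^sup>2 * z\<^sup>2) * exp (z / 8)"
    using A B by (intro mult_mono) auto
  also have "\<dots> = a\<^sup>2 * (z\<^sup>2 * exp (z / 8))" by simp
  also have "\<dots> \<le> a\<^sup>2 * (16 * exp W)" using D by (intro mult_left_mono) auto
  finally show ?thesis by simp
qed

context prob_space
begin

lemma subg_integrable_exp:
  fixes Y :: "'a \<Rightarrow> real"
  assumes Ym[measurable]: "Y \<in> borel_measurable M" and k: "k > 0"
    and E2: "(\<integral>\<^sup>+x. ennreal (exp ((Y x)\<^sup>2 / k)) \<partial>M) \<le> 2"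
  shows "integrable M (\<lambda>x. exp ((Y x)\<^sup>2 / k))" "expectation (\<lambda>x. exp ((Y x)\<^sup>2 / k)) \<le> 2"
    "integrable M (\<lambda>x. (Y x)\<^sup>2)"
proof -
  show iE: "integrable M (\<lambda>x. exp ((Y x)\<^sup>2 / k))"
  proof (rule integrableI_bounded)
    show "(\<integral>\<^sup>+x. ennreal (norm (exp ((Y x)\<^sup>2 / k))) \<partial>M) < \<infinity>"
      using E2 by (simp add: le_less_trans)
  qed simp
  have "ennreal (expectation (\<lambda>x. exp ((Y x)\<^sup>2 / k))) = (\<integral>\<^sup>+x. ennreal (exp ((Y x)\<^sup>2 / k)) \<partial>M)"
    by (rule nn_integral_eq_integral[OF iE, symmetric]) simp
  also have "\<dots> \<le> ennreal 2" using E2 by simp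
  finally show "expectation (\<lambda>x. exp ((Y x)\<^sup>2 / k)) \<le> 2"
    by (subst (asm) ennreal_le_iff) auto
  have "integrable M (\<lambda>x. (Y x)\<^sup>2 / k)"
  proof (rule Bochner_Integration.integrable_bound[OF iE])
    show "AE x in M. norm ((Y x)\<^sup>2 / k) \<le> norm (exp ((Y x)\<^sup>2 / k))"
    proof (intro AE_I2)
      fix x
      have "1 + (Y x)\<^sup>2 / k \<le> exp ((Y x)\<^sup>2 / k)" by (rule exp_ge_add_one_self)
      hence "(Y x)\<^sup>2 / k \<le> exp ((Y x)\<^sup>2 / k)" by linarith
      moreover have "(Y x)\<^sup>2 / k \<ge> 0" using k by simp
      ultimately show "norm ((Y x)\<^sup>2 / k) \<le> norm (exp ((Y x)\<^sup>2 / k))" by simp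
    qed
  qed simp
  hence "integrable M (\<lambda>x. k * ((Y x)\<^sup>2 / k))" by (rule integrable_mult_right)
  thus "integrable M (\<lambda>x. (Y x)\<^sup>2)" using k by simp
qed

lemma mgf_sq:
  fixes Y :: "'a \<Rightarrow> real"
  assumes Ym[measurable]: "Y \<in> borel_measurable M" and k: "k > 0"
    and E2: "(\<integral>\<^sup>+x. ennreal (exp ((Y x)\<^sup>2 / k)) \<partial>M) \<le> 2" and th: "\<bar>\<theta>\<bar> \<le> 1 / (8 * k)"
  shows "(\<integral>\<^sup>+x. ennreal (exp (\<theta> * ((Y x)\<^sup>2 - expectation (\<lambda>x. (Y x)\<^sup>2)))) \<partial>M)
           \<le> ennreal (exp (\<theta>\<^sup>2 * (8 * k)\<^sup>2))"
proof -
  define W where "W = (\<lambda>x. (Y x)\<^sup>2 / k)"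
  have Wm[measurable]: "W \<in> borel_measurable M" unfolding W_def by simp
  have W0: "W x \<ge> 0" for x unfolding W_def using k by simp
  have iE: "integrable M (\<lambda>x. exp (W x))" and EE: "expectation (\<lambda>x. exp (W x)) \<le> 2"
    using subg_integrable_exp[OF Ym k E2] unfolding W_def by auto
  have iW: "integrable M W"
  proof (rule Bochner_Integration.integrable_bound[OF iE])
    show "AE x in M. norm (W x) \<le> norm (exp (W x))"
    proof (intro AE_I2)
      fix x
      have "1 + W x \<le> exp (W x)" by (rule exp_ge_add_one_self)
      hence "W x \<le> exp (W x)" by linarith
      thus "norm (W x) \<le> norm (exp (W x))" using W0[of x] by simp
    qed
  qed simp
  define m where "m = expectation W"
  have m0: "m \<ge> 0" unfolding m_def using W0 by (intro integral_nonneg_AE) auto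
  have "m \<le> expectation (\<lambda>x. exp (W x) - 1)"
    unfolding m_def
  proof (rule integral_mono[OF iW])
    show "integrable M (\<lambda>x. exp (W x) - 1)" using iE by simp
    fix x have "1 + W x \<le> exp (W x)" by (rule exp_ge_add_one_self)
    thus "W x \<le> exp (W x) - 1" by linarith
  qed
  also have "\<dots> = expectation (\<lambda>x. exp (W x)) - 1"
    using iE by (simp add: prob_space)
  finally have m1: "m \<le> 1" using EE by simp
  have EY: "expectation (\<lambda>x. (Y x)\<^sup>2) = k * m"
  proof -
    have "(\<lambda>x. (Y x)\<^sup>2) = (\<lambda>x. k * W x)" unfolding W_def using k by auto
    thus ?thesis unfolding m_def by simp
  qed
  define a where "a = \<theta> * k"
  have a: "\<bar>a\<bar> \<le> 1/8"
  proof -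
    have "\<bar>a\<bar> = \<bar>\<theta>\<bar> * k" unfolding a_def using k by (simp add: abs_mult)
    also have "\<dots> \<le> 1 / (8 * k) * k" using th k by (intro mult_right_mono) auto
    also have "\<dots> = 1/8" using k by simp
    finally show ?thesis .
  qed
  define X where "X = (\<lambda>x. a * (W x - m))"
  have Xm[measurable]: "X \<in> borel_measurable M" unfolding X_def by simp
  have eqX: "\<theta> * ((Y x)\<^sup>2 - expectation (\<lambda>x. (Y x)\<^sup>2)) = X x" for x
    unfolding EY X_def a_def W_def using k by (simp add: field_simps)
  have iX: "integrable M X" unfolding X_def using iW by simp
  have EX: "expectation X = 0" unfolding X_def using iW by (simp add: m_def prob_space)
  have Rb: "(X x)\<^sup>2 * exp \<bar>X x\<bar> \<le> 16 * a\<^sup>2 * exp (W x)" for x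
    unfolding X_def by (rule sq_exp_bound[OF W0 m0 m1 a])
  have iR: "integrable M (\<lambda>x. (X x)\<^sup>2 * exp \<bar>X x\<bar>)"
  proof (rule Bochner_Integration.integrable_bound)
    show "integrable M (\<lambda>x. 16 * a\<^sup>2 * exp (W x))" using iE by simp
    show "AE x in M. norm ((X x)\<^sup>2 * exp \<bar>X x\<bar>) \<le> norm (16 * a\<^sup>2 * exp (W x))"
      using Rb by (intro AE_I2) simp
  qed simp
  have iG: "integrable M (\<lambda>x. 1 + X x + (X x)\<^sup>2 * exp \<bar>X x\<bar>)"
    using iX iR by simp
  have iexp: "integrable M (\<lambda>x. exp (X x))"
  proof (rule Bochner_Integration.integrable_bound)
    show "integrable M (\<lambda>x. 1 + \<bar>X x\<bar> + (X x)\<^sup>2 * exp \<bar>X x\<bar>)"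
      using iX iR by simp
    show "AE x in M. norm (exp (X x)) \<le> norm (1 + \<bar>X x\<bar> + (X x)\<^sup>2 * exp \<bar>X x\<bar>)"
    proof (intro AE_I2)
      fix x
      have "exp (X x) \<le> 1 + X x + (X x)\<^sup>2 * exp \<bar>X x\<bar>" by (rule exp_quad_bound)
      moreover have "0 \<le> (X x)\<^sup>2 * exp \<bar>X x\<bar>" by simp
      ultimately show "norm (exp (X x)) \<le> norm (1 + \<bar>X x\<bar> + (X x)\<^sup>2 * exp \<bar>X x\<bar>)" by simp
    qed
  qed simp
  have "expectation (\<lambda>x. exp (X x)) \<le> expectation (\<lambda>x. 1 + X x + (X x)\<^sup>2 * exp \<bar>X x\<bar>)"
    by (rule integral_mono[OF iexp iG]) (rule exp_quad_bound)
  also have "\<dots> = 1 + expectation X + expectation (\<lambda>x. (X x)\<^sup>2 * exp \<bar>X x\<bar>)"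
    using iX iR by (simp add: prob_space)
  also have "expectation (\<lambda>x. (X x)\<^sup>2 * exp \<bar>X x\<bar>) \<le> expectation (\<lambda>x. 16 * a\<^sup>2 * exp (W x))"
    by (rule integral_mono[OF iR]) (use iE Rb in auto)
  also have "expectation (\<lambda>x. 16 * a\<^sup>2 * exp (W x)) = 16 * a\<^sup>2 * expectation (\<lambda>x. exp (W x))"
    by simp
  also have "\<dots> \<le> 16 * a\<^sup>2 * 2" using EE by (intro mult_left_mono) auto
  finally have "expectation (\<lambda>x. exp (X x)) \<le> 1 + 32 * a\<^sup>2" using EX by simp
  also have "\<dots> \<le> exp (32 * a\<^sup>2)" using exp_ge_add_one_self[of "32 * a\<^sup>2"] by simp
  also have "\<dots> \<le> exp (\<theta>\<^sup>2 * (8 * k)\<^sup>2)" unfolding a_def by (simp add: power_mult_distrib)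
  finally have fin: "expectation (\<lambda>x. exp (X x)) \<le> exp (\<theta>\<^sup>2 * (8 * k)\<^sup>2)" .
  have "(\<integral>\<^sup>+x. ennreal (exp (\<theta> * ((Y x)\<^sup>2 - expectation (\<lambda>x. (Y x)\<^sup>2)))) \<partial>M)
        = (\<integral>\<^sup>+x. ennreal (exp (X x)) \<partial>M)" unfolding eqX ..
  also have "\<dots> = ennreal (expectation (\<lambda>x. exp (X x)))"
    by (rule nn_integral_eq_integral[OF iexp]) simp
  also have "\<dots> \<le> ennreal (exp (\<theta>\<^sup>2 * (8 * k)\<^sup>2))" using fin by (rule ennreal_leI)
  finally show ?thesis .
qed

end

context prob_space
begin

lemma bern_ge:
  fixes Z :: "nat \<Rightarrow> 'a \<Rightarrow> real"
  assumes fin: "finite I" and ind: "indep_vars (\<lambda>_. borel) Z I" and B: "B > 0" and y: "y > 0"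
    and mgf: "\<And>i \<theta>. i \<in> I \<Longrightarrow> \<bar>\<theta>\<bar> \<le> 1 / B \<Longrightarrow>
               (\<integral>\<^sup>+x. ennreal (exp (\<theta> * Z i x)) \<partial>M) \<le> ennreal (exp (\<theta>\<^sup>2 * B\<^sup>2))"
    and cI: "card I \<le> N" and N: "N > 0"
  shows "prob {x\<in>space M. (\<Sum>i\<in>I. Z i x) \<ge> y} \<le> exp (- min (y\<^sup>2 / (4 * real N * B\<^sup>2)) (y / (2 * B)))"
proof -
  have rv: "\<And>i. i \<in> I \<Longrightarrow> random_variable borel (Z i)"
    using ind unfolding indep_vars_def by auto
  define \<theta> where "\<theta> = min (y / (2 * real N * B\<^sup>2)) (1 / B)"
  have th0: "\<theta> > 0" unfolding \<theta>_def using B y N by simp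
  have th1: "\<bar>\<theta>\<bar> \<le> 1 / B" unfolding \<theta>_def using th0 \<theta>_def by auto
  have meas: "(\<lambda>x. (\<Sum>i\<in>I. Z i x)) \<in> borel_measurable M" using rv by simp
  have "ennreal (prob {x\<in>space M. (\<Sum>i\<in>I. Z i x) \<ge> y}) = emeasure M {x\<in>space M. (\<Sum>i\<in>I. Z i x) \<ge> y}"
    by (simp add: emeasure_eq_measure)
  also have "\<dots> \<le> ennreal (exp (-\<theta> * y)) * (\<integral>\<^sup>+x. ennreal (exp (\<theta> * (\<Sum>i\<in>I. Z i x))) * indicator (space M) x \<partial>M)"
    by (rule Chernoff_ineq_nn_integral_ge[OF th0]) (use meas in auto)
  also have "(\<integral>\<^sup>+x. ennreal (exp (\<theta> * (\<Sum>i\<in>I. Z i x))) * indicator (space M) x \<partial>M)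
       = (\<integral>\<^sup>+x. (\<Prod>i\<in>I. ennreal (exp (\<theta> * Z i x))) \<partial>M)"
    by (intro nn_integral_cong)
       (simp_all add: sum_distrib_left exp_sum fin prod_ennreal)
  also have "\<dots> = (\<Prod>i\<in>I. \<integral>\<^sup>+x. ennreal (exp (\<theta> * Z i x)) \<partial>M)"
    by (intro indep_vars_nn_integral fin indep_vars_compose2[OF ind]) auto
  also have "ennreal (exp (-\<theta> * y)) * \<dots> \<le> ennreal (exp (-\<theta> * y)) * (\<Prod>i\<in>I. ennreal (exp (\<theta>\<^sup>2 * B\<^sup>2)))"
    by (intro mult_left_mono prod_mono_ennreal mgf th1) auto
  also have "\<dots> = ennreal (exp (-\<theta> * y) * exp (\<theta>\<^sup>2 * B\<^sup>2) ^ card I)"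
    by (simp add: prod_ennreal ennreal_mult ennreal_power)
  also have "exp (-\<theta> * y) * exp (\<theta>\<^sup>2 * B\<^sup>2) ^ card I = exp (-\<theta> * y + card I * (\<theta>\<^sup>2 * B\<^sup>2))"
    by (simp only: exp_add exp_of_nat_mult)
  also have "\<dots> \<le> exp (-\<theta> * y + N * (\<theta>\<^sup>2 * B\<^sup>2))"
    using cI by (intro exp_mono add_left_mono mult_right_mono) auto
  also have "-\<theta> * y + N * (\<theta>\<^sup>2 * B\<^sup>2) \<le> - min (y\<^sup>2 / (4 * real N * B\<^sup>2)) (y / (2 * B))"
  proof (cases "y / (2 * real N * B\<^sup>2) \<le> 1 / B")
    case True
    hence t: "\<theta> = y / (2 * real N * B\<^sup>2)" unfolding \<theta>_def by simp
    have "-\<theta> * y + N * (\<theta>\<^sup>2 * B\<^sup>2) = - (y\<^sup>2 / (4 * real N * B\<^sup>2))"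
      unfolding t using B N by (simp add: field_simps power2_eq_square)
    thus ?thesis by simp
  next
    case False
    hence t: "\<theta> = 1 / B" unfolding \<theta>_def by simp
    have "1 / B < y / (2 * real N * B\<^sup>2)" using False by simp
    hence "2 * N * B\<^sup>2 / B < y" using B N by (simp add: field_simps)
    hence "2 * N * B < y" using B by (simp add: power2_eq_square)
    hence Nl: "N < y / (2 * B)" using B by (simp add: field_simps)
    have "-\<theta> * y + N * (\<theta>\<^sup>2 * B\<^sup>2) = - (y / B) + N"
      unfolding t using B by (simp add: power2_eq_square)
    also have "\<dots> \<le> - (y / (2 * B))" using Nl B by (simp add: field_simps)
    finally show ?thesis by simp
  qed
  finally have "ennreal (prob {x\<in>space M. (\<Sum>i\<in>I. Z i x) \<ge> y}) \<le> ennreal (exp (- min (y\<^sup>2 / (4 * real N * B\<^sup>2)) (y / (2 * B))))"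
    using ennreal_leI by blast
  thus ?thesis by (subst (asm) ennreal_le_iff) auto
qed

lemma bern_abs:
  fixes Z :: "nat \<Rightarrow> 'a \<Rightarrow> real"
  assumes fin: "finite I" and ind: "indep_vars (\<lambda>_. borel) Z I" and B: "B > 0" and y: "y > 0"
    and mgf: "\<And>i \<theta>. i \<in> I \<Longrightarrow> \<bar>\<theta>\<bar> \<le> 1 / B \<Longrightarrow>
               (\<integral>\<^sup>+x. ennreal (exp (\<theta> * Z i x)) \<partial>M) \<le> ennreal (exp (\<theta>\<^sup>2 * B\<^sup>2))"
    and cI: "card I \<le> N" and N: "N > 0"
  shows "prob {x\<in>space M. \<bar>\<Sum>i\<in>I. Z i x\<bar> \<ge> y} \<le> 2 * exp (- min (y\<^sup>2 / (4 * real N * B\<^sup>2)) (y / (2 * B)))"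
proof -
  have rv: "\<And>i. i \<in> I \<Longrightarrow> random_variable borel (Z i)"
    using ind unfolding indep_vars_def by auto
  have ind': "indep_vars (\<lambda>_. borel) (\<lambda>i x. - Z i x) I"
    by (rule indep_vars_compose2[OF ind]) auto
  have mgf': "(\<integral>\<^sup>+x. ennreal (exp (\<theta> * - Z i x)) \<partial>M) \<le> ennreal (exp (\<theta>\<^sup>2 * B\<^sup>2))"
    if "i \<in> I" "\<bar>\<theta>\<bar> \<le> 1 / B" for i \<theta>
    using mgf[of i "-\<theta>"] that by simp
  have "{x\<in>space M. \<bar>\<Sum>i\<in>I. Z i x\<bar> \<ge> y} =
        {x\<in>space M. (\<Sum>i\<in>I. Z i x) \<ge> y} \<union> {x\<in>space M. (\<Sum>i\<in>I. - Z i x) \<ge> y}"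
    by (auto simp: sum_negf)
  hence "prob {x\<in>space M. \<bar>\<Sum>i\<in>I. Z i x\<bar> \<ge> y} \<le>
         prob {x\<in>space M. (\<Sum>i\<in>I. Z i x) \<ge> y} + prob {x\<in>space M. (\<Sum>i\<in>I. - Z i x) \<ge> y}"
    using rv by (simp add: measure_Un_le)
  also have "\<dots> \<le> exp (- min (y\<^sup>2 / (4 * real N * B\<^sup>2)) (y / (2 * B))) + exp (- min (y\<^sup>2 / (4 * real N * B\<^sup>2)) (y / (2 * B)))"
  proof (rule add_mono)
    show "prob {x\<in>space M. (\<Sum>i\<in>I. Z i x) \<ge> y} \<le> exp (- min (y\<^sup>2 / (4 * real N * B\<^sup>2)) (y / (2 * B)))"
      by (rule bern_ge[OF fin ind B y mgf cI N])
    show "prob {x\<in>space M. (\<Sum>i\<in>I. - Z i x) \<ge> y} \<le> exp (- min (y\<^sup>2 / (4 * real N * B\<^sup>2)) (y / (2 * B)))"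
      using bern_ge[OF fin ind' B y mgf' cI N] by simp
  qed
  finally show ?thesis by simp
qed

end

definition Yv :: "nat \<Rightarrow> (nat \<Rightarrow> real) \<Rightarrow> nat \<Rightarrow> data \<Rightarrow> real" where
  "Yv p w i x = (\<Sum>j<p. w j * x i j)"

lemma meas_row: "sets P = sets (borel :: data measure) \<Longrightarrow> (\<lambda>x::data. x i) \<in> measurable P borel"
proof -
  assume s: "sets P = sets (borel :: data measure)"
  have "(\<lambda>x::data. x i) \<in> measurable borel borel"
    by (intro borel_measurable_continuous_onI continuous_on_product_coordinates)
  moreover have "measurable P (borel :: (nat \<Rightarrow> real) measure) = measurable borel borel"
    by (rule measurable_cong_sets[OF s refl])
  ultimately show ?thesis by simp
qed

lemma meas_entry: "sets P = sets (borel :: data measure) \<Longrightarrow> (\<lambda>x::data. x i j) \<in> borel_measurable P"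
proof -
  assume s: "sets P = sets (borel :: data measure)"
  have "(\<lambda>v::nat \<Rightarrow> real. v j) \<in> borel_measurable borel"
    by (intro borel_measurable_continuous_onI continuous_on_product_coordinates)
  from measurable_compose[OF meas_row[OF s] this] show ?thesis by simp
qed

lemma meas_Yv_fun: "(\<lambda>v::nat \<Rightarrow> real. \<Sum>j<p. w j * v j) \<in> borel_measurable borel"
proof -
  have "(\<lambda>v::nat \<Rightarrow> real. v j) \<in> borel_measurable borel" for j
    by (intro borel_measurable_continuous_onI continuous_on_product_coordinates)
  thus ?thesis by (intro borel_measurable_sum borel_measurable_times borel_measurable_const) auto
qed

lemma meas_Yv: "sets P = sets (borel :: data measure) \<Longrightarrow> Yv p w i \<in> borel_measurable P"
  unfolding Yv_def using meas_entry
  by (intro borel_measurable_sum borel_measurable_times borel_measurable_const) auto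

lemma op_norm_cong: "mat_eq p A B \<Longrightarrow> op_norm p A = op_norm p B"
proof -
  assume m: "mat_eq p A B"
  have "matvec p A = matvec p B"
    unfolding matvec_def using m unfolding mat_eq_def by (intro ext) auto
  thus ?thesis unfolding op_norm_def by simp
qed

lemma subg_Yv:
  assumes cP: "class_Pu p n u P" and i: "i \<in> {1..n}" and u: "u > 0" and sg: "\<sigma> > 0"
    and op: "op_norm p (cov P i) \<le> \<sigma>\<^sup>2" and w: "nsq p w \<le> 1"
  shows "(\<integral>\<^sup>+x. ennreal (exp ((Yv p w i x)\<^sup>2 / (2 * u * \<sigma>\<^sup>2))) \<partial>P) \<le> 2"
proof -
  define k where "k = 2 * u * \<sigma>\<^sup>2"
  have k: "k > 0" unfolding k_def using u sg by simp
  have dd: "is_data_dist p n P" using cP unfolding class_Pu_def by auto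
  hence ps: "prob_space P" and sP: "sets P = sets borel" unfolding is_data_dist_def by auto
  show ?thesis
  proof (cases "nsq p w = 0")
    case True
    have "Yv p w i x = 0" for x unfolding Yv_def using nsq_zero[OF True] by simp
    hence "(\<integral>\<^sup>+x. ennreal (exp ((Yv p w i x)\<^sup>2 / (2 * u * \<sigma>\<^sup>2))) \<partial>P) = (\<integral>\<^sup>+x. 1 \<partial>P)" by simp
    also have "\<dots> = 1" using prob_space.emeasure_space_1[OF ps] by simp
    finally show ?thesis by simp
  next
    case False
    define c where "c = sqrt (nsq p w)"
    have c0: "c > 0" unfolding c_def using False nsq_nonneg[of p w] by simp
    have c1: "c \<le> 1" unfolding c_def using w by simp
    define v where "v = (\<lambda>j. if j < p then w j / c else 0)"
    have "nsq p v = nsq p (\<lambda>j. (1/c) * w j)" unfolding nsq_def v_def by (intro sum.cong) auto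
    also have "\<dots> = (1/c)\<^sup>2 * nsq p w" by (rule nsq_scale)
    also have "\<dots> = 1" unfolding c_def using False nsq_nonneg[of p w] by (simp add: power_divide)
    finally have "nsq p v = 1" .
    hence vs: "v \<in> sphere_p p" unfolding sphere_p_def vnorm_nsq v_def by auto
    have Yvw: "Yv p w i x = c * Yv p v i x" for x
      unfolding Yv_def v_def using c0 by (simp add: sum_distrib_left)
    let ?Y = "\<lambda>x. \<Sum>j<p. v j * x i j"
    have "psi2 P ?Y \<le> psi2_vec p P (\<lambda>x. x i)"
      unfolding psi2_vec_def using vs by (intro SUP_upper2[OF vs]) simp
    hence "(psi2 P ?Y)\<^sup>2 \<le> (psi2_vec p P (\<lambda>x. x i))\<^sup>2" by (intro power_mono) auto
    also have "\<dots> \<le> ennreal (u * op_norm p (cov P i))" using cP i unfolding class_Pu_def by auto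
    also have "\<dots> \<le> ennreal (u * \<sigma>\<^sup>2)" using op u by (intro ennreal_leI mult_left_mono) auto
    also have "\<dots> < ennreal k" unfolding k_def using u sg by (subst ennreal_less_iff) auto
    finally have lt: "(psi2 P ?Y)\<^sup>2 < ennreal k" .
    have "psi2 P ?Y < ennreal (sqrt k)"
    proof (rule ccontr)
      assume "\<not> psi2 P ?Y < ennreal (sqrt k)"
      hence "ennreal (sqrt k) \<le> psi2 P ?Y" by simp
      hence "(ennreal (sqrt k))\<^sup>2 \<le> (psi2 P ?Y)\<^sup>2" by (intro power_mono) auto
      also have "(ennreal (sqrt k))\<^sup>2 = ennreal k" using k by (simp add: ennreal_power)
      finally show False using lt by simp
    qed
    then obtain e where e: "e \<in> {ennreal t | t. t > 0 \<and> (\<integral>\<^sup>+ w. ennreal (exp ((?Y w)\<^sup>2 / t\<^sup>2)) \<partial>P) \<le> 2}"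
      and el: "e < ennreal (sqrt k)"
      unfolding psi2_def by (auto simp: Inf_less_iff)
    then obtain t where t0: "t > 0" and et: "e = ennreal t"
      and tint: "(\<integral>\<^sup>+ w. ennreal (exp ((?Y w)\<^sup>2 / t\<^sup>2)) \<partial>P) \<le> 2" by auto
    have "t < sqrt k" using el et t0 by (simp add: ennreal_less_iff)
    hence "t\<^sup>2 < (sqrt k)\<^sup>2" using t0 by (intro power_strict_mono) auto
    hence tk: "t\<^sup>2 < k" using k by simp
    have "(\<integral>\<^sup>+x. ennreal (exp ((Yv p w i x)\<^sup>2 / (2 * u * \<sigma>\<^sup>2))) \<partial>P)
          \<le> (\<integral>\<^sup>+ w. ennreal (exp ((?Y w)\<^sup>2 / t\<^sup>2)) \<partial>P)"
    proof (intro nn_integral_mono ennreal_leI)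
      fix x
      have "(Yv p w i x)\<^sup>2 = c\<^sup>2 * (?Y x)\<^sup>2" using Yvw[of x] unfolding Yv_def by (simp add: power_mult_distrib)
      also have "\<dots> \<le> 1 * (?Y x)\<^sup>2" using c0 c1 by (intro mult_right_mono) (auto simp: power_le_one)
      finally have a: "(Yv p w i x)\<^sup>2 \<le> (?Y x)\<^sup>2" by simp
      have "(Yv p w i x)\<^sup>2 / k \<le> (?Y x)\<^sup>2 / k" using a k by (simp add: divide_right_mono)
      also have "\<dots> \<le> (?Y x)\<^sup>2 / t\<^sup>2" using tk t0 k by (intro divide_left_mono) auto
      finally show "exp ((Yv p w i x)\<^sup>2 / (2 * u * \<sigma>\<^sup>2)) \<le> exp ((?Y x)\<^sup>2 / t\<^sup>2)"
        unfolding k_def by simp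
    qed
    also have "\<dots> \<le> 2" by (rule tint)
    finally show ?thesis .
  qed
qed

lemma sq_sum_expand: "(\<Sum>j<p. a j)\<^sup>2 = (\<Sum>j<p. \<Sum>l<p. a j * (a l :: real))"
  by (simp add: power2_eq_square sum_product)

lemma entry_sq_integrable:
  assumes cP: "class_Pu p n u P" and i: "i \<in> {1..n}" and u: "u > 0" and sg: "\<sigma> > 0"
    and op: "op_norm p (cov P i) \<le> \<sigma>\<^sup>2" and j: "j < p"
  shows "integrable P (\<lambda>x. (x i j)\<^sup>2)"
proof -
  have dd: "is_data_dist p n P" using cP unfolding class_Pu_def by auto
  hence ps: "prob_space P" and sP: "sets P = sets borel" unfolding is_data_dist_def by auto
  define e where "e = (\<lambda>l. if l = j then 1 else (0::real))"
  have "nsq p e = (\<Sum>l<p. if l = j then 1 else 0)" unfolding nsq_def e_def by (intro sum.cong) auto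
  also have "\<dots> = 1" using j by simp
  finally have ne: "nsq p e \<le> 1" by simp
  have Ye: "Yv p e i x = x i j" for x
  proof -
    have "Yv p e i x = (\<Sum>l<p. if l = j then x i l else 0)" unfolding Yv_def e_def by (intro sum.cong) auto
    thus ?thesis using j by simp
  qed
  have "integrable P (\<lambda>x. (Yv p e i x)\<^sup>2)"
    by (rule prob_space.subg_integrable_exp(3)[OF ps meas_Yv[OF sP] _ subg_Yv[OF cP i u sg op ne]])
       (use u sg in simp)
  thus ?thesis unfolding Ye .
qed

lemma prod_integrable:
  assumes "integrable P (\<lambda>x. (f x)\<^sup>2)" "integrable P (\<lambda>x. (g x)\<^sup>2)"
    "f \<in> borel_measurable P" "g \<in> borel_measurable P"
  shows "integrable P (\<lambda>x. f x * (g x :: real))"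
proof (rule Bochner_Integration.integrable_bound)
  show "integrable P (\<lambda>x. (f x)\<^sup>2 + (g x)\<^sup>2)" using assms by simp
  show "(\<lambda>x. f x * g x) \<in> borel_measurable P" using assms by simp
  show "AE x in P. norm (f x * g x) \<le> norm ((f x)\<^sup>2 + (g x)\<^sup>2)"
  proof (intro AE_I2)
    fix x
    have "2 * \<bar>f x * g x\<bar> \<le> (f x)\<^sup>2 + (g x)\<^sup>2"
      using sum_squares_bound[of "\<bar>f x\<bar>" "\<bar>g x\<bar>"] by (simp add: abs_mult power2_abs)
    moreover have "0 \<le> (f x)\<^sup>2 + (g x)\<^sup>2" by simp
    ultimately show "norm (f x * g x) \<le> norm ((f x)\<^sup>2 + (g x)\<^sup>2)" by simp
  qed
qed

lemma EYv:
  assumes cP: "class_Pu p n u P" and i: "i \<in> {1..n}" and u: "u > 0" and sg: "\<sigma> > 0"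
    and op: "op_norm p (cov P i) \<le> \<sigma>\<^sup>2"
  shows "(\<integral>x. (Yv p w i x)\<^sup>2 \<partial>P) = quadf p (cov P i) w"
proof -
  have dd: "is_data_dist p n P" using cP unfolding class_Pu_def by auto
  hence sP: "sets P = sets borel" unfolding is_data_dist_def by auto
  have ip: "integrable P (\<lambda>x. x i j * x i l)" if "j < p" "l < p" for j l
    by (rule prod_integrable[OF entry_sq_integrable[OF cP i u sg op that(1)]
        entry_sq_integrable[OF cP i u sg op that(2)] meas_entry[OF sP] meas_entry[OF sP]])
  have "(\<integral>x. (Yv p w i x)\<^sup>2 \<partial>P) = (\<integral>x. (\<Sum>j<p. \<Sum>l<p. (w j * w l) * (x i j * x i l)) \<partial>P)"
    unfolding Yv_def sq_sum_expand by (simp add: mult_ac)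
  also have "\<dots> = (\<Sum>j<p. (\<integral>x. (\<Sum>l<p. (w j * w l) * (x i j * x i l)) \<partial>P))"
    by (rule Bochner_Integration.integral_sum) (use ip in auto)
  also have "\<dots> = (\<Sum>j<p. \<Sum>l<p. (\<integral>x. (w j * w l) * (x i j * x i l) \<partial>P))"
    by (intro sum.cong refl Bochner_Integration.integral_sum) (use ip in auto)
  also have "\<dots> = (\<Sum>j<p. \<Sum>l<p. (w j * w l) * (\<integral>x. x i j * x i l \<partial>P))"
    by simp
  also have "\<dots> = quadf p (cov P i) w"
    unfolding quadf_def cov_def by (simp add: mult_ac)
  finally show ?thesis .
qed

lemma quadf_gram: "quadf p (\<lambda>j k. (\<Sum>i\<in>I. f i j * f i k) / t) w = (\<Sum>i\<in>I. (\<Sum>j<p. w j * f i j)\<^sup>2) / t"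
proof -
  have "quadf p (\<lambda>j k. (\<Sum>i\<in>I. f i j * f i k) / t) w = (\<Sum>j<p. \<Sum>k<p. \<Sum>i\<in>I. (w j * f i j) * (w k * f i k) / t)"
    unfolding quadf_def by (simp add: sum_distrib_left sum_distrib_right sum_divide_distrib mult_ac)
  also have "\<dots> = (\<Sum>i\<in>I. \<Sum>j<p. \<Sum>k<p. (w j * f i j) * (w k * f i k) / t)"
    by (simp add: sum.swap[of _ I] )
  also have "\<dots> = (\<Sum>i\<in>I. (\<Sum>j<p. w j * f i j)\<^sup>2) / t"
    unfolding sq_sum_expand by (simp add: sum_divide_distrib)
  finally show ?thesis .
qed

lemma quad_stat:
  "quadf p (\<lambda>j k. Sig1hat t x j k - Sig2hat n t x j k) w =
     ((\<Sum>i=1..t. (Yv p w i x)\<^sup>2) - (\<Sum>i=1..t. (Yv p w (n - i + 1) x)\<^sup>2)) / t"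
proof -
  have "quadf p (\<lambda>j k. Sig1hat t x j k - Sig2hat n t x j k) w =
        quadf p (Sig1hat t x) w - quadf p (Sig2hat n t x) w"
    unfolding quadf_def by (simp add: sum_subtractf algebra_simps)
  also have "quadf p (Sig1hat t x) w = (\<Sum>i=1..t. (Yv p w i x)\<^sup>2) / t"
    unfolding Sig1hat_def Yv_def by (rule quadf_gram)
  also have "quadf p (Sig2hat n t x) w = (\<Sum>i=1..t. (Yv p w (n - i + 1) x)\<^sup>2) / t"
    unfolding Sig2hat_def Yv_def by (rule quadf_gram)
  finally show ?thesis by (simp add: diff_divide_distrib)
qed

lemma sum_rev_block:
  fixes n t :: nat
  assumes "t \<le> n"
  shows "(\<Sum>i=1..t. g (n - i + 1)) = (\<Sum>i\<in>{n-t+1..n}. (g i :: real))"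
proof (rule sum.reindex_bij_witness[of _ "\<lambda>i. n - i + 1" "\<lambda>i. n - i + 1"])
  fix a assume "a \<in> {1..t}"
  hence a: "1 \<le> a" "a \<le> t" by auto
  show "n - (n - a + 1) + 1 = a" using a assms by presburger
  show "n - a + 1 \<in> {n - t + 1..n}" unfolding atLeastAtMost_iff using a assms by presburger
  show "g (n - a + 1) = g (n - a + 1)" ..
next
  fix b assume "b \<in> {n - t + 1..n}"
  hence b: "n - t + 1 \<le> b" "b \<le> n" by auto
  show "n - (n - b + 1) + 1 = b" using b assms by presburger
  show "n - b + 1 \<in> {1..t}" unfolding atLeastAtMost_iff using b assms by presburger
qed

lemma stat_tail:
  assumes cP: "class_Pu p n u P" and u: "u > 0" and sg: "\<sigma> > 0"
    and op: "\<forall>i\<in>{1..n}. op_norm p (cov P i) \<le> \<sigma>\<^sup>2"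
    and t: "1 \<le> t" "2 * t \<le> n" and w: "nsq p w \<le> 1" and y: "y > 0"
  shows "measure P {x\<in>space P. \<bar>((\<Sum>i=1..t. (Yv p w i x)\<^sup>2) - (\<Sum>i=1..t. (Yv p w (n - i + 1) x)\<^sup>2)) / t
            - ((\<Sum>i=1..t. (\<integral>x. (Yv p w i x)\<^sup>2 \<partial>P)) - (\<Sum>i=1..t. (\<integral>x. (Yv p w (n - i + 1) x)\<^sup>2 \<partial>P))) / t\<bar> \<ge> y}
      \<le> 2 * exp (- min (t * y\<^sup>2 / (8 * (16 * u * \<sigma>\<^sup>2)\<^sup>2)) (t * y / (2 * (16 * u * \<sigma>\<^sup>2))))"
proof -
  have dd: "is_data_dist p n P" using cP unfolding class_Pu_def by auto
  hence ps: "prob_space P" and sP: "sets P = sets borel" unfolding is_data_dist_def by auto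
  have indall: "prob_space.indep_vars P (\<lambda>_. borel) (\<lambda>i x. x i) {1..n}"
    using cP unfolding class_Pu_def by auto
  define k where "k = 2 * u * \<sigma>\<^sup>2"
  define B where "B = 16 * u * \<sigma>\<^sup>2"
  have k0: "k > 0" unfolding k_def using u sg by simp
  have B0: "B > 0" unfolding B_def using u sg by simp
  have Bk: "B = 8 * k" unfolding B_def k_def by simp
  define \<mu> where "\<mu> = (\<lambda>i. (\<integral>x. (Yv p w i x)\<^sup>2 \<partial>P))"
  define sgn where "sgn = (\<lambda>i. if i \<le> t then 1 else (-1::real))"
  define Z where "Z = (\<lambda>i x. sgn i * ((Yv p w i x)\<^sup>2 - \<mu> i))"
  define I where "I = {1..t} \<union> {n-t+1..n}"
  have disj: "{1..t} \<inter> {n-t+1..n} = {}" using t by auto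
  have Isub: "I \<subseteq> {1..n}" unfolding I_def using t by auto
  have finI: "finite I" unfolding I_def by simp
  have cardI: "card I = 2 * t" unfolding I_def using disj t by (subst card_Un_disjoint) auto
  define Q where "Q = (\<lambda>x. ((\<Sum>i=1..t. (Yv p w i x)\<^sup>2) - (\<Sum>i=1..t. (Yv p w (n - i + 1) x)\<^sup>2)) / t)"
  define c where "c = ((\<Sum>i=1..t. \<mu> i) - (\<Sum>i=1..t. \<mu> (n - i + 1))) / t"
  have tn: "t \<le> n" using t by simp
  have sumZ: "(\<Sum>i\<in>I. Z i x) = t * (Q x - c)" for x
  proof -
    have "(\<Sum>i\<in>I. Z i x) = (\<Sum>i=1..t. Z i x) + (\<Sum>i\<in>{n-t+1..n}. Z i x)"
      unfolding I_def using disj by (subst sum.union_disjoint) auto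
    also have "(\<Sum>i=1..t. Z i x) = (\<Sum>i=1..t. (Yv p w i x)\<^sup>2 - \<mu> i)"
      unfolding Z_def sgn_def by (intro sum.cong) auto
    also have "(\<Sum>i\<in>{n-t+1..n}. Z i x) = - (\<Sum>i\<in>{n-t+1..n}. (Yv p w i x)\<^sup>2 - \<mu> i)"
      unfolding Z_def sgn_def using t by (simp add: sum_negf[symmetric]) (intro sum.cong, auto)
    also have "(\<Sum>i\<in>{n-t+1..n}. (Yv p w i x)\<^sup>2 - \<mu> i) = (\<Sum>i=1..t. (Yv p w (n - i + 1) x)\<^sup>2 - \<mu> (n - i + 1))"
      using sum_rev_block[OF tn, of "\<lambda>i. (Yv p w i x)\<^sup>2 - \<mu> i"] by simp
    finally have hZ: "(\<Sum>i\<in>I. Z i x) = (\<Sum>i=1..t. (Yv p w i x)\<^sup>2 - \<mu> i) + - (\<Sum>i=1..t. (Yv p w (n - i + 1) x)\<^sup>2 - \<mu> (n - i + 1))" .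
    have tq: "t * (Q x - c) = ((\<Sum>i=1..t. (Yv p w i x)\<^sup>2) - (\<Sum>i=1..t. (Yv p w (n - i + 1) x)\<^sup>2))
               - ((\<Sum>i=1..t. \<mu> i) - (\<Sum>i=1..t. \<mu> (n - i + 1)))"
      unfolding Q_def c_def using t by (simp add: field_simps)
    show ?thesis unfolding hZ tq by (simp add: sum_subtractf)
  qed
  have evt: "{x\<in>space P. \<bar>Q x - c\<bar> \<ge> y} = {x\<in>space P. \<bar>\<Sum>i\<in>I. Z i x\<bar> \<ge> t * y}"
  proof -
    have "\<bar>\<Sum>i\<in>I. Z i x\<bar> = t * \<bar>Q x - c\<bar>" for x unfolding sumZ by (simp add: abs_mult)
    moreover have "(t * a \<ge> t * y) = (a \<ge> y)" for a :: real using t by simp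
    ultimately show ?thesis by auto
  qed
  have ind: "prob_space.indep_vars P (\<lambda>_. borel) Z I"
  proof -
    have "prob_space.indep_vars P (\<lambda>_. borel)
            (\<lambda>i x. (\<lambda>v. sgn i * ((\<Sum>j<p. w j * v j)\<^sup>2 - \<mu> i)) (x i)) {1..n}"
      by (rule prob_space.indep_vars_compose2[OF ps indall]) (use meas_Yv_fun in simp)
    hence "prob_space.indep_vars P (\<lambda>_. borel) Z {1..n}" unfolding Z_def Yv_def by simp
    thus ?thesis by (rule prob_space.indep_vars_subset[OF ps _ Isub])
  qed
  have mgf: "(\<integral>\<^sup>+x. ennreal (exp (\<theta> * Z i x)) \<partial>P) \<le> ennreal (exp (\<theta>\<^sup>2 * B\<^sup>2))"
    if i: "i \<in> I" and th: "\<bar>\<theta>\<bar> \<le> 1 / B" for i \<theta>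
  proof -
    have i': "i \<in> {1..n}" using i Isub by auto
    have E2: "(\<integral>\<^sup>+x. ennreal (exp ((Yv p w i x)\<^sup>2 / k)) \<partial>P) \<le> 2"
      unfolding k_def by (rule subg_Yv[OF cP i' u sg _ w]) (use op i' in auto)
    have th': "\<bar>sgn i * \<theta>\<bar> \<le> 1 / (8 * k)" using th unfolding Bk sgn_def by (auto simp: abs_mult)
    have "(\<integral>\<^sup>+x. ennreal (exp (\<theta> * Z i x)) \<partial>P) =
          (\<integral>\<^sup>+x. ennreal (exp ((sgn i * \<theta>) * ((Yv p w i x)\<^sup>2 - (\<integral>x. (Yv p w i x)\<^sup>2 \<partial>P)))) \<partial>P)"
      unfolding Z_def \<mu>_def by (simp add: mult_ac)
    also have "\<dots> \<le> ennreal (exp ((sgn i * \<theta>)\<^sup>2 * (8 * k)\<^sup>2))"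
      by (rule prob_space.mgf_sq[OF ps meas_Yv[OF sP] k0 E2 th'])
    also have "(sgn i * \<theta>)\<^sup>2 * (8 * k)\<^sup>2 = \<theta>\<^sup>2 * B\<^sup>2"
      unfolding Bk sgn_def by (simp add: power_mult_distrib)
    finally show ?thesis .
  qed
  have ty: "t * y > 0" using t y by simp
  have "measure P {x\<in>space P. \<bar>\<Sum>i\<in>I. Z i x\<bar> \<ge> t * y}
      \<le> 2 * exp (- min ((t * y)\<^sup>2 / (4 * real (2 * t) * B\<^sup>2)) ((t * y) / (2 * B)))"
    by (rule prob_space.bern_abs[OF ps finI ind B0 ty mgf]) (use cardI t in auto)
  also have "(t * y)\<^sup>2 / (4 * real (2 * t) * B\<^sup>2) = t * y\<^sup>2 / (8 * B\<^sup>2)"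
    using t by (simp add: power2_eq_square field_simps)
  finally show ?thesis unfolding evt[symmetric] Q_def c_def \<mu>_def B_def .
qed

definition Qf :: "nat \<Rightarrow> nat \<Rightarrow> nat \<Rightarrow> (nat \<Rightarrow> real) \<Rightarrow> data \<Rightarrow> real" where
  "Qf p n t w x = ((\<Sum>i=1..t. (Yv p w i x)\<^sup>2) - (\<Sum>i=1..t. (Yv p w (n - i + 1) x)\<^sup>2)) / t"

definition cf :: "nat \<Rightarrow> nat \<Rightarrow> data measure \<Rightarrow> nat \<Rightarrow> (nat \<Rightarrow> real) \<Rightarrow> real" where
  "cf p n P t w = ((\<Sum>i=1..t. (\<integral>x. (Yv p w i x)\<^sup>2 \<partial>P)) - (\<Sum>i=1..t. (\<integral>x. (Yv p w (n - i + 1) x)\<^sup>2 \<partial>P))) / t"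

definition Ev :: "nat \<Rightarrow> nat \<Rightarrow> data measure \<Rightarrow> nat \<Rightarrow> (nat \<Rightarrow> real) \<Rightarrow> real \<Rightarrow> data set" where
  "Ev p n P t w y = {x\<in>space P. \<bar>Qf p n t w x - cf p n P t w\<bar> \<ge> y}"

lemma tail_Ev:
  assumes "class_Pu p n u P" "u > 0" "\<sigma> > 0" "\<forall>i\<in>{1..n}. op_norm p (cov P i) \<le> \<sigma>\<^sup>2"
    "1 \<le> t" "2 * t \<le> n" "nsq p w \<le> 1" "y > 0"
  shows "measure P (Ev p n P t w y)
      \<le> 2 * exp (- min (t * y\<^sup>2 / (8 * (16 * u * \<sigma>\<^sup>2)\<^sup>2)) (t * y / (2 * (16 * u * \<sigma>\<^sup>2))))"
  unfolding Ev_def Qf_def cf_def by (rule stat_tail[OF assms])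

lemma Ev_sets: assumes "sets P = sets (borel :: data measure)" shows "Ev p n P t w y \<in> sets P"
proof -
  have [measurable]: "Yv p w i \<in> borel_measurable P" for i by (rule meas_Yv[OF assms])
  have [measurable]: "Qf p n t w \<in> borel_measurable P" unfolding Qf_def by measurable
  show ?thesis unfolding Ev_def by measurable
qed

lemma expo:
  fixes u \<sigma> A lam t g r :: real
  assumes u: "u > 0" and sg: "\<sigma> > 0" and A: "A \<ge> 1" and lam: "lam \<ge> 128 * u * A"
    and t: "t > 0" and g: "g > 0" and r1: "t * r \<ge> g" and r2: "t * r\<^sup>2 \<ge> g"
  shows "min (t * (lam * \<sigma>\<^sup>2 * r / 2)\<^sup>2 / (8 * (16 * u * \<sigma>\<^sup>2)\<^sup>2))
             (t * (lam * \<sigma>\<^sup>2 * r / 2) / (2 * (16 * u * \<sigma>\<^sup>2))) \<ge> A * g"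
proof -
  have lam0: "lam > 0" using u A lam by (smt (verit) mult_pos_pos)
  have e1: "t * (lam * \<sigma>\<^sup>2 * r / 2)\<^sup>2 / (8 * (16 * u * \<sigma>\<^sup>2)\<^sup>2) = lam\<^sup>2 * (t * r\<^sup>2) / (8192 * u\<^sup>2)"
    using u sg by (simp add: power_mult_distrib power_divide field_simps)
  have e2: "t * (lam * \<sigma>\<^sup>2 * r / 2) / (2 * (16 * u * \<sigma>\<^sup>2)) = lam * (t * r) / (64 * u)"
    using u sg by (simp add: field_simps)
  have l2: "lam\<^sup>2 \<ge> (128 * u * A)\<^sup>2" using lam u A by (intro power_mono) auto
  have "A * g \<le> lam\<^sup>2 * (t * r\<^sup>2) / (8192 * u\<^sup>2)"
  proof -
    have "A * g \<le> 2 * A\<^sup>2 * g" using A g by (simp add: power2_eq_square mult_right_mono)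
    also have "2 * A\<^sup>2 * g = (128 * u * A)\<^sup>2 * g / (8192 * u\<^sup>2)" using u by (simp add: power_mult_distrib)
    also have "\<dots> \<le> lam\<^sup>2 * (t * r\<^sup>2) / (8192 * u\<^sup>2)"
      using l2 r2 g u by (intro divide_right_mono mult_mono) auto
    finally show ?thesis .
  qed
  moreover have "A * g \<le> lam * (t * r) / (64 * u)"
  proof -
    have "A * g \<le> 2 * A * g" using A g by simp
    also have "2 * A * g = (128 * u * A) * g / (64 * u)" using u by simp
    also have "\<dots> \<le> lam * (t * r) / (64 * u)"
      using lam r1 g u A lam0 by (intro divide_right_mono mult_mono) auto
    finally show ?thesis .
  qed
  ultimately show ?thesis unfolding e1 e2 by simp
qed

lemma quadf_cong: "mat_eq p A B \<Longrightarrow> quadf p A v = quadf p B v"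
  unfolding mat_eq_def quadf_def by (intro sum.cong refl) auto

lemma symm_stat: "symm p (\<lambda>j k. Sig1hat t x j k - Sig2hat n t x j k)"
  unfolding symm_def Sig1hat_def Sig2hat_def by (simp add: mult.commute)

lemma zv_nsq: assumes "z \<in> Zset p s" "1 \<le> s" shows "nsq p (zv s z) \<le> 1"
proof -
  have zs: "real_of_int (\<Sum>j<p. (z j)\<^sup>2) \<le> 16 * real s" using assms(1) unfolding Zset_def
    by (simp only: mem_Collect_eq) (metis of_int_le_iff of_int_mult of_int_numeral of_int_of_nat_eq)
  have "nsq p (zv s z) = (\<Sum>j<p. real_of_int ((z j)\<^sup>2)) / (16 * real s)"
    unfolding nsq_def zv_def by (simp add: power_divide power_mult_distrib sum_divide_distrib)
  also have "\<dots> \<le> 1" using zs assms(2) by simp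
  finally show ?thesis .
qed

lemma rate_facts:
  assumes "gam p n s > 0" "t \<ge> 1"
  shows "real t * rate p n s t \<ge> gam p n s" "real t * (rate p n s t)\<^sup>2 \<ge> gam p n s" "rate p n s t > 0"
proof -
  let ?g = "gam p n s"
  have t0: "real t > 0" using assms by simp
  have r1: "rate p n s t \<ge> ?g / t" unfolding rate_def by simp
  have r2: "rate p n s t \<ge> sqrt (?g / t)" unfolding rate_def by simp
  show "real t * rate p n s t \<ge> ?g" using r1 t0 by (simp add: field_simps)
  have gt: "?g / t \<ge> 0" using assms(1) t0 by (intro divide_nonneg_pos) auto
  have "(sqrt (?g / t))\<^sup>2 \<le> (rate p n s t)\<^sup>2" using r2 gt by (intro power_mono) auto
  moreover note gt
  ultimately have "?g / t \<le> (rate p n s t)\<^sup>2" by simp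
  thus "real t * (rate p n s t)\<^sup>2 \<ge> ?g" using t0 by (simp add: field_simps)
  show "rate p n s t > 0" using r2 assms t0 by (smt (verit) divide_pos_pos real_sqrt_gt_zero)
qed

lemma pow_exp_ln: "x > 0 \<Longrightarrow> x ^ k = exp (real k * ln x)"
  by (simp add: exp_of_nat_mult)

lemma null_bound:
  assumes d: "0 < \<delta>" "\<delta> < 1" and u: "0 < u" and A: "A = 33 + ln (8 / \<delta>)"
    and lam: "lam \<ge> 128 * u * A"
    and p: "1 \<le> p" and n: "2 \<le> n" and s: "1 \<le> s" "s \<le> p" and sg: "\<sigma> > 0"
    and P0: "class_P0 p n u \<sigma> P0"
  shows "(\<integral>x. psi_test p n s \<sigma> lam x \<partial>P0) \<le> \<delta> / 2"
proof -
  obtain \<Sigma> where S: "\<Sigma> \<in> PD p" "op_norm p \<Sigma> = \<sigma>\<^sup>2" "\<forall>i\<in>{1..n}. mat_eq p (cov P0 i) \<Sigma>"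
    using P0 unfolding class_P0_def by auto
  have cP: "class_Pu p n u P0" using P0 unfolding class_P0_def by auto
  have dd: "is_data_dist p n P0" using cP unfolding class_Pu_def by auto
  hence ps: "prob_space P0" and sP: "sets P0 = sets borel" unfolding is_data_dist_def by auto
  interpret prob_space P0 by (rule ps)
  have op: "\<forall>i\<in>{1..n}. op_norm p (cov P0 i) \<le> \<sigma>\<^sup>2"
  proof
    fix i assume "i \<in> {1..n}"
    hence "op_norm p (cov P0 i) = op_norm p \<Sigma>" using op_norm_cong S(3) by blast
    thus "op_norm p (cov P0 i) \<le> \<sigma>\<^sup>2" using S(2) by simp
  qed
  define g where "g = gam p n s"
  have g1: "g \<ge> 1" and gs: "g \<ge> real s * ln (exp 1 * real p / real s)" and ge: "exp g \<ge> ln (8 * real n)"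
    unfolding g_def using gam_ge[OF s n] by auto
  have A1: "A \<ge> 33" unfolding A using d by simp
  define r where "r = (\<lambda>t. rate p n s t)"
  define y where "y = (\<lambda>t. lam * \<sigma>\<^sup>2 * r t / 2)"
  define Z where "Z = Zset p s"
  define U where "U = (\<Union>t\<in>Tset n. \<Union>z\<in>Z. Ev p n P0 t (zv s z) (y t))"
  have finZ: "finite Z" unfolding Z_def by (rule Zset_finite)
  have finT: "finite (Tset n)" by (rule Tset_finite)
  have lam0: "lam > 0" using lam u A1 by (smt (verit) mult_pos_pos)
  have cf0: "cf p n P0 t w = 0" if "t \<in> Tset n" for t w
  proof -
    have t1: "1 \<le> t" "2 * t \<le> n" using Tset_mem[OF n that] by auto
    have h: "(\<integral>x. (Yv p w i x)\<^sup>2 \<partial>P0) = quadf p \<Sigma> w" if "i \<in> {1..n}" for i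
      using EYv[OF cP that u sg] op that quadf_cong S(3) by simp
    have "(\<Sum>i=1..t. (\<integral>x. (Yv p w i x)\<^sup>2 \<partial>P0)) = (\<Sum>i=1..t. quadf p \<Sigma> w)"
    proof (intro sum.cong refl h)
      fix i assume "i \<in> {1..t}" thus "i \<in> {1..n}" using t1 by auto
    qed
    moreover have "(\<Sum>i=1..t. (\<integral>x. (Yv p w (n - i + 1) x)\<^sup>2 \<partial>P0)) = (\<Sum>i=1..t. quadf p \<Sigma> w)"
    proof (intro sum.cong refl h)
      fix i assume "i \<in> {1..t}" thus "n - i + 1 \<in> {1..n}" using t1 by auto
    qed
    ultimately show ?thesis unfolding cf_def by simp
  qed
  have Esets: "Ev p n P0 t w yy \<in> sets P0" for t w yy by (rule Ev_sets[OF sP])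
  have Ebound: "measure P0 (Ev p n P0 t (zv s z) (y t)) \<le> 2 * exp (- (A * g))"
    if t: "t \<in> Tset n" and z: "z \<in> Z" for t z
  proof -
    have t1: "1 \<le> t" "2 * t \<le> n" using Tset_mem[OF n t] by auto
    have rf: "real t * r t \<ge> g" "real t * (r t)\<^sup>2 \<ge> g" "r t > 0"
      unfolding r_def g_def using rate_facts[of p n s t] g1 t1 unfolding g_def by auto
    have yp: "y t > 0" unfolding y_def using lam0 sg rf by simp
    have "measure P0 (Ev p n P0 t (zv s z) (y t))
       \<le> 2 * exp (- min (t * (y t)\<^sup>2 / (8 * (16 * u * \<sigma>\<^sup>2)\<^sup>2)) (t * (y t) / (2 * (16 * u * \<sigma>\<^sup>2))))"
      by (rule tail_Ev[OF cP u sg op t1 zv_nsq yp]) (use z s Z_def in auto)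
    also have "\<dots> \<le> 2 * exp (- (A * g))"
      using expo[OF u sg _ lam _ _ rf(1,2)] A1 g1 t1 unfolding y_def by simp
    finally show ?thesis .
  qed
  have incl: "psi_test p n s \<sigma> lam x \<le> indicator U x" if x: "x \<in> space P0" for x
  proof (cases "\<exists>t\<in>Tset n. Sstat p n s t x > lam * \<sigma>\<^sup>2 * rate p n s t")
    case True
    then obtain t where t: "t \<in> Tset n" and St: "Sstat p n s t x > lam * \<sigma>\<^sup>2 * rate p n s t" by auto
    obtain z where z: "z \<in> Zset p s"
      and qz: "\<bar>quadf p (\<lambda>j k. Sig1hat t x j k - Sig2hat n t x j k) (zv s z)\<bar> > lam * \<sigma>\<^sup>2 * rate p n s t / 2"
      using net_exceed[OF p s(1) symm_stat St[unfolded Sstat_def]] by auto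
    have "x \<in> Ev p n P0 t (zv s z) (y t)"
      unfolding Ev_def using x qz cf0[OF t] unfolding quad_stat Qf_def y_def r_def by auto
    hence "x \<in> U" unfolding U_def Z_def using t z by auto
    thus ?thesis unfolding psi_test_def by simp
  next
    case False thus ?thesis unfolding psi_test_def by simp
  qed
  have Usets: "U \<in> sets P0" unfolding U_def by (intro sets.finite_UN finT finZ Esets)
  have Usub: "U \<subseteq> space P0" using Usets sets.sets_into_space by blast
  have "measure P0 U \<le> (\<Sum>t\<in>Tset n. measure P0 (\<Union>z\<in>Z. Ev p n P0 t (zv s z) (y t)))"
    unfolding U_def by (rule measure_UNION_le[OF finT]) (use Esets finZ in auto)
  also have "\<dots> \<le> (\<Sum>t\<in>Tset n. \<Sum>z\<in>Z. measure P0 (Ev p n P0 t (zv s z) (y t)))"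
    by (intro sum_mono measure_UNION_le[OF finZ] Esets)
  also have "\<dots> \<le> (\<Sum>t\<in>Tset n. \<Sum>z\<in>Z. 2 * exp (- (A * g)))"
    by (intro sum_mono Ebound)
  also have "\<dots> = real (card (Tset n)) * (real (card Z) * (2 * exp (- (A * g))))" by simp
  also have "\<dots> \<le> (2 * exp g) * (exp (32 * g) * (2 * exp (- (A * g))))"
  proof (rule mult_mono)
    have "real (card (Tset n)) \<le> 2 * ln (8 * real n)" by (rule Tset_card[OF n])
    thus "real (card (Tset n)) \<le> 2 * exp g" using ge by linarith
    have "real (card Z) \<le> (exp 1 * real p / real s) ^ (32 * s)" unfolding Z_def by (rule Zset_card[OF s])
    also have "\<dots> = exp (real (32 * s) * ln (exp 1 * real p / real s))"
      by (rule pow_exp_ln) (use s in simp)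
    also have "\<dots> \<le> exp (32 * g)" using gs by simp
    finally show "real (card Z) * (2 * exp (- (A * g))) \<le> exp (32 * g) * (2 * exp (- (A * g)))"
      by (intro mult_right_mono) auto
  qed auto
  also have "\<dots> = 4 * exp ((33 - A) * g)" by (simp add: exp_add[symmetric] algebra_simps)
  also have "\<dots> \<le> 4 * exp (33 - A)"
  proof -
    have "(33 - A) * g \<le> (33 - A) * 1" using A1 g1 by (intro mult_left_mono_neg) auto
    thus ?thesis by simp
  qed
  also have "exp (33 - A) = \<delta> / 8"
  proof -
    have "exp (33 - A) = exp (- ln (8 / \<delta>))" unfolding A by simp
    also have "\<dots> = 1 / exp (ln (8 / \<delta>))" by (simp add: exp_minus inverse_eq_divide)
    also have "exp (ln (8 / \<delta>)) = 8 / \<delta>" using d by simp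
    finally show ?thesis by simp
  qed
  finally have mU: "measure P0 U \<le> \<delta> / 2" by simp
  show ?thesis
  proof (cases "integrable P0 (psi_test p n s \<sigma> lam)")
    case True
    have iU: "integrable P0 (indicator U :: data \<Rightarrow> real)"
      by (rule integrable_real_indicator[OF Usets]) (use emeasure_finite[of U] in \<open>simp add: less_top[symmetric]\<close>)
    have "(\<integral>x. psi_test p n s \<sigma> lam x \<partial>P0) \<le> (\<integral>x. indicator U x \<partial>P0)"
      by (rule integral_mono[OF True iU]) (use incl in auto)
    also have "\<dots> = measure P0 U" using Usub by (simp add: Int_absorb2)
    finally show ?thesis using mU by simp
  next
    case False
    show ?thesis using not_integrable_integral_eq[OF False] d by simp
  qed
qed

lemma alt_bound:
  assumes d: "0 < \<delta>" "\<delta> < 1" and u: "0 < u" and A: "A = 33 + ln (8 / \<delta>)"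
    and lam: "lam \<ge> 128 * u * A" and lam1: "lam \<ge> 1"
    and p: "1 \<le> p" and n: "2 \<le> n" and s: "1 \<le> s" "s \<le> p" and sg: "\<sigma> > 0"
    and P: "class_P1_wit p n s u \<sigma> \<rho> t0 \<Sigma>1 \<Sigma>2 P"
    and C: "C \<ge> 8 * lam\<^sup>2" and rho: "\<rho> \<ge> C * gam p n s"
    and cond: "real (min t0 (n - t0)) * (op_norm p (\<lambda>j k. \<Sigma>1 j k - \<Sigma>2 j k))\<^sup>2 / \<sigma> ^ 4 \<ge> C * gam p n s"
  shows "(\<integral>x. 1 - psi_test p n s \<sigma> lam x \<partial>P) \<le> \<delta> / 2"
proof -
  define \<Delta> where "\<Delta> = (\<lambda>j k. \<Sigma>1 j k - \<Sigma>2 j k)"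
  define D where "D = op_norm p \<Delta>"
  define m where "m = min t0 (n - t0)"
  define g where "g = gam p n s"
  have cP: "class_Pu p n u P" and t0: "t0 \<in> {1..n-1}"
    and m1: "\<forall>i\<in>{1..n}. i \<le> t0 \<longrightarrow> mat_eq p (cov P i) \<Sigma>1"
    and m2: "\<forall>i\<in>{1..n}. t0 < i \<longrightarrow> mat_eq p (cov P i) \<Sigma>2"
    and mx: "max (op_norm p \<Sigma>1) (op_norm p \<Sigma>2) \<le> \<sigma>\<^sup>2"
    and Ms: "\<Delta> \<in> Mset p s"
    and rhoeq: "real m * min (D / (\<sigma>\<^sup>2 - D)) ((D / (\<sigma>\<^sup>2 - D))\<^sup>2) = \<rho>"
    using P unfolding class_P1_wit_def \<Delta>_def D_def m_def Let_def by auto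
  have symD: "symm p \<Delta>" and lamD: "lam_smax p s \<Delta> = D" using Ms unfolding Mset_def D_def by auto
  have dd: "is_data_dist p n P" using cP unfolding class_Pu_def by auto
  hence ps: "prob_space P" and sP: "sets P = sets borel" unfolding is_data_dist_def by auto
  interpret prob_space P by (rule ps)
  have g1: "g \<ge> 1" unfolding g_def using gam_ge[OF s n] by auto
  have lam0: "lam > 0" using lam1 by simp
  have Cg: "C * g \<ge> 8 * lam\<^sup>2 * g" using C g1 by (intro mult_right_mono) auto
  have Cg0: "C * g > 0" using Cg lam0 g1 by (smt (verit) mult_pos_pos zero_less_power)
  have m1': "m \<ge> 1" "2 * m \<le> n" using t0 unfolding m_def by auto
  have D0: "D \<ge> 0" unfolding D_def[symmetric] using lam_nonneg[OF p s(1), of \<Delta>] lamD by simp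
  have condm: "real m * D\<^sup>2 / \<sigma> ^ 4 \<ge> C * g" using cond unfolding m_def D_def \<Delta>_def g_def .
  have Dpos: "D > 0"
  proof (rule ccontr)
    assume "\<not> D > 0" hence "D = 0" using D0 by simp
    thus False using condm Cg0 by simp
  qed
  have Dlt: "D < \<sigma>\<^sup>2"
  proof (rule ccontr)
    assume "\<not> D < \<sigma>\<^sup>2"
    hence "\<sigma>\<^sup>2 - D \<le> 0" by simp
    hence x0: "D / (\<sigma>\<^sup>2 - D) \<le> 0" using D0 by (simp add: divide_nonneg_nonpos)
    hence "min (D / (\<sigma>\<^sup>2 - D)) ((D / (\<sigma>\<^sup>2 - D))\<^sup>2) \<le> 0" by simp
    hence "\<rho> \<le> 0" unfolding rhoeq[symmetric] by (intro mult_nonneg_nonpos) auto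
    thus False using rho Cg0 unfolding g_def by simp
  qed
  define q where "q = D\<^sup>2 / \<sigma> ^ 4"
  have q1: "q < 1"
  proof -
    have "D\<^sup>2 < (\<sigma>\<^sup>2)\<^sup>2" using Dlt D0 by (intro power_strict_mono) auto
    thus ?thesis unfolding q_def using sg by (simp add: power_mult[symmetric] mult.commute)
  qed
  have mq: "real m * q \<ge> C * g" using condm unfolding q_def by simp
  have mgt: "real m > C * g"
  proof -
    have "real m * q < real m * 1" using q1 m1' by (intro mult_strict_left_mono) auto
    thus ?thesis using mq by simp
  qed
  obtain t where tT: "t \<in> Tset n" and tm: "t \<le> m" and mt: "m < 2 * t"
    using Tset_exists[OF m1'] by auto
  have t1: "1 \<le> t" "2 * t \<le> n" using Tset_mem[OF n tT] by auto
  have tt0: "t \<le> t0" "t \<le> n - t0" using tm unfolding m_def by auto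
  have tg: "real t \<ge> g"
  proof -
    have "real (2 * t) > C * g" using mgt mt by (smt (verit) of_nat_less_iff)
    moreover have "lam\<^sup>2 \<ge> 1" using lam1 by (simp add: one_le_power)
    hence "C \<ge> 8" using C by linarith
    hence "C * g \<ge> 8 * g" using g1 by (intro mult_right_mono) auto
    ultimately show ?thesis using g1 by linarith
  qed
  define r where "r = rate p n s t"
  have gt0: "g / t \<ge> 0" and gt1: "g / t \<le> 1" using tg g1 t1 by (auto simp: field_simps)
  have sqge: "g / t \<le> sqrt (g / t)"
  proof -
    have s1: "sqrt (g / t) \<le> 1" using gt1 by simp
    have "g / t = sqrt (g / t) * sqrt (g / t)"
      unfolding real_sqrt_mult_self using abs_of_nonneg[OF gt0] by (rule sym)
    also have "\<dots> \<le> sqrt (g / t) * 1" using s1 gt0 by (intro mult_left_mono) auto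
    finally show ?thesis by simp
  qed
  have rr: "r = sqrt (g / t)" unfolding r_def rate_def g_def[symmetric] using sqge by (simp add: max_def)
  have r0: "r \<ge> 0" unfolding rr using gt0 by simp
  have r2: "r\<^sup>2 = g / t" unfolding rr using gt0 by simp
  have D2: "D \<ge> 2 * lam * \<sigma>\<^sup>2 * r"
  proof -
    have mpos: "real m > 0" using m1' by simp
    have "real m * D\<^sup>2 \<ge> C * g * \<sigma> ^ 4" using mq sg unfolding q_def by (simp add: field_simps)
    hence "real m * D\<^sup>2 \<ge> 8 * lam\<^sup>2 * g * \<sigma> ^ 4" using Cg sg by (smt (verit) mult_right_mono zero_le_power)
    moreover have "real (2 * t) * D\<^sup>2 \<ge> real m * D\<^sup>2" using mt by (intro mult_right_mono) auto
    moreover have "real (2 * t) * D\<^sup>2 = 2 * (real t * D\<^sup>2)" by simp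
    ultimately have h: "real t * D\<^sup>2 \<ge> 4 * (lam\<^sup>2 * g * \<sigma> ^ 4)" by linarith
    have "4 * lam\<^sup>2 * \<sigma> ^ 4 * (g / t) = 4 * (lam\<^sup>2 * g * \<sigma> ^ 4) / t" by simp
    also have "\<dots> \<le> real t * D\<^sup>2 / t" using h t1 by (intro divide_right_mono) auto
    also have "\<dots> = D\<^sup>2" using t1 by simp
    finally have "D\<^sup>2 \<ge> 4 * lam\<^sup>2 * \<sigma> ^ 4 * (g / t)" .
    also have "4 * lam\<^sup>2 * \<sigma> ^ 4 * (g / t) = (2 * lam * \<sigma>\<^sup>2 * r)\<^sup>2"
      unfolding power_mult_distrib r2 by (simp add: power_mult[symmetric])
    finally show ?thesis using D0 by (rule power2_le_imp_le)
  qed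
  have "3 * D / 4 < lam_smax p s \<Delta>" using lamD Dpos by simp
  then obtain v where v: "v \<in> sparse_sphere p s" and qv: "3 * D / 4 < \<bar>quadf p \<Delta> v\<bar>"
    unfolding lam_smax_def using less_cSUP_iff[OF sparse_ne[OF p s(1)] bdd_lam] by blast
  have nv: "nsq p v \<le> 1" using v unfolding sparse_sphere_def sphere_p_def vnorm_nsq by auto
  have op: "\<forall>i\<in>{1..n}. op_norm p (cov P i) \<le> \<sigma>\<^sup>2"
  proof
    fix i assume i: "i \<in> {1..n}"
    show "op_norm p (cov P i) \<le> \<sigma>\<^sup>2"
    proof (cases "i \<le> t0")
      case True thus ?thesis using op_norm_cong m1 i mx by (metis max.bounded_iff)
    next
      case False thus ?thesis using op_norm_cong m2 i mx by (metis max.bounded_iff not_le)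
    qed
  qed
  have cfv: "cf p n P t v = quadf p \<Delta> v"
  proof -
    have "(\<Sum>i=1..t. (\<integral>x. (Yv p v i x)\<^sup>2 \<partial>P)) = (\<Sum>i=1..t. quadf p \<Sigma>1 v)"
    proof (intro sum.cong refl)
      fix i assume "i \<in> {1..t}"
      hence i: "i \<in> {1..n}" "i \<le> t0" using t1 tt0 by auto
      thus "(\<integral>x. (Yv p v i x)\<^sup>2 \<partial>P) = quadf p \<Sigma>1 v"
        using EYv[OF cP i(1) u sg] op quadf_cong m1 by simp
    qed
    moreover have "(\<Sum>i=1..t. (\<integral>x. (Yv p v (n - i + 1) x)\<^sup>2 \<partial>P)) = (\<Sum>i=1..t. quadf p \<Sigma>2 v)"
    proof (intro sum.cong refl)
      fix i assume "i \<in> {1..t}"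
      hence i: "n - i + 1 \<in> {1..n}" "t0 < n - i + 1" using t1 tt0 by auto
      thus "(\<integral>x. (Yv p v (n - i + 1) x)\<^sup>2 \<partial>P) = quadf p \<Sigma>2 v"
        using EYv[OF cP i(1) u sg] op quadf_cong m2 by simp
    qed
    moreover have "quadf p \<Delta> v = quadf p \<Sigma>1 v - quadf p \<Sigma>2 v"
      unfolding quadf_def \<Delta>_def by (simp add: sum_subtractf algebra_simps)
    ultimately show ?thesis unfolding cf_def using t1 by (simp add: right_diff_distrib[symmetric])
  qed
  define y where "y = lam * \<sigma>\<^sup>2 * r / 2"
  define E where "E = Ev p n P t v y"
  have rf: "real t * r \<ge> g" "real t * r\<^sup>2 \<ge> g" "r > 0"
    unfolding r_def g_def using rate_facts[of p n s t] g1 t1 unfolding g_def by auto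
  have yp: "y > 0" unfolding y_def using lam0 sg rf by simp
  have A1: "A \<ge> 33" unfolding A using d by simp
  have "measure P E \<le> 2 * exp (- min (t * y\<^sup>2 / (8 * (16 * u * \<sigma>\<^sup>2)\<^sup>2)) (t * y / (2 * (16 * u * \<sigma>\<^sup>2))))"
    unfolding E_def by (rule tail_Ev[OF cP u sg op t1 nv yp])
  also have "\<dots> \<le> 2 * exp (- (A * g))"
    using expo[OF u sg _ lam _ _ rf(1,2)] A1 g1 t1 unfolding y_def by simp
  also have "\<dots> \<le> 2 * exp (- A)"
  proof -
    have "A * 1 \<le> A * g" using A1 g1 by (intro mult_left_mono) auto
    thus ?thesis by simp
  qed
  also have "exp (- A) \<le> \<delta> / 8"
  proof -
    have "exp (- A) = exp (- 33) * exp (- ln (8 / \<delta>))" unfolding A by (simp add: exp_add[symmetric])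
    also have "exp (- ln (8 / \<delta>)) = \<delta> / 8" using d by (simp add: exp_minus inverse_eq_divide)
    also have "exp (- 33) * (\<delta> / 8) \<le> 1 * (\<delta> / 8)" using d by (intro mult_right_mono) auto
    finally show ?thesis by simp
  qed
  finally have mE: "measure P E \<le> \<delta> / 2" using d by simp
  have Esets: "E \<in> sets P" unfolding E_def by (rule Ev_sets[OF sP])
  have incl: "1 - psi_test p n s \<sigma> lam x \<le> indicator E x" if x: "x \<in> space P" for x
  proof (cases "x \<in> E")
    case True thus ?thesis unfolding psi_test_def by simp
  next
    case False
    hence close: "\<bar>Qf p n t v x - quadf p \<Delta> v\<bar> < y" using x unfolding E_def Ev_def cfv by auto
    have "\<bar>quadf p \<Delta> v\<bar> > 3 * (2 * lam * \<sigma>\<^sup>2 * r) / 4" using qv D2 by linarith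
    hence "\<bar>Qf p n t v x\<bar> > lam * \<sigma>\<^sup>2 * r" using close unfolding y_def by linarith
    moreover have "Qf p n t v x = quadf p (\<lambda>j k. Sig1hat t x j k - Sig2hat n t x j k) v"
      unfolding quad_stat Qf_def ..
    moreover have "\<bar>quadf p (\<lambda>j k. Sig1hat t x j k - Sig2hat n t x j k) v\<bar> \<le> Sstat p n s t x"
      unfolding Sstat_def by (rule lam_ge[OF v])
    ultimately have "Sstat p n s t x > lam * \<sigma>\<^sup>2 * rate p n s t" unfolding r_def by linarith
    hence "psi_test p n s \<sigma> lam x = 1" unfolding psi_test_def using tT by auto
    thus ?thesis by simp
  qed
  show ?thesis
  proof (cases "integrable P (\<lambda>x. 1 - psi_test p n s \<sigma> lam x)")
    case True
    have iE: "integrable P (indicator E :: data \<Rightarrow> real)"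
      by (rule integrable_real_indicator[OF Esets]) (use emeasure_finite[of E] in \<open>simp add: less_top[symmetric]\<close>)
    have "(\<integral>x. 1 - psi_test p n s \<sigma> lam x \<partial>P) \<le> (\<integral>x. indicator E x \<partial>P)"
      by (rule integral_mono[OF True iE]) (use incl in auto)
    also have "\<dots> = measure P E" using Esets sets.sets_into_space by (simp add: Int_absorb2)
    finally show ?thesis using mE by simp
  next
    case False
    show ?thesis using not_integrable_integral_eq[OF False] d by simp
  qed
qed

theorem proposition4:
  fixes \<delta> u :: real
  assumes "0 < \<delta>" "\<delta> < 1" "0 < u"
  shows "\<exists>lam0 > 0. \<forall>lam \<ge> lam0. \<forall>(p::nat) (n::nat) (s::nat) (\<sigma>::real) (\<rho>::real) (C::real)
           (P0::data measure) (P::data measure) (t0::nat) \<Sigma>1 \<Sigma>2.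
      1 \<le> p \<longrightarrow> 2 \<le> n \<longrightarrow> 1 \<le> s \<longrightarrow> s \<le> p \<longrightarrow> 0 < \<sigma> \<longrightarrow>
      class_P0 p n u \<sigma> P0 \<longrightarrow>
      class_P1_wit p n s u \<sigma> \<rho> t0 \<Sigma>1 \<Sigma>2 P \<longrightarrow>
      C \<ge> 8 * lam\<^sup>2 \<longrightarrow>
      \<rho> \<ge> C * gam p n s \<longrightarrow>
      real (min t0 (n - t0)) * (op_norm p (\<lambda>j k. \<Sigma>1 j k - \<Sigma>2 j k))\<^sup>2 / \<sigma> ^ 4
         \<ge> C * gam p n s \<longrightarrow>
      (\<integral>x. psi_test p n s \<sigma> lam x \<partial>P0) + (\<integral>x. 1 - psi_test p n s \<sigma> lam x \<partial>P) \<le> \<delta>"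
proof -
  define A where "A = 33 + ln (8 / \<delta>)"
  define lam0 where "lam0 = max 1 (128 * u * A)"
  have "lam0 > 0" unfolding lam0_def by simp
  moreover have "\<forall>lam \<ge> lam0. \<forall>(p::nat) (n::nat) (s::nat) (\<sigma>::real) (\<rho>::real) (C::real)
           (P0::data measure) (P::data measure) (t0::nat) \<Sigma>1 \<Sigma>2.
      1 \<le> p \<longrightarrow> 2 \<le> n \<longrightarrow> 1 \<le> s \<longrightarrow> s \<le> p \<longrightarrow> 0 < \<sigma> \<longrightarrow>
      class_P0 p n u \<sigma> P0 \<longrightarrow>
      class_P1_wit p n s u \<sigma> \<rho> t0 \<Sigma>1 \<Sigma>2 P \<longrightarrow>
      C \<ge> 8 * lam\<^sup>2 \<longrightarrow>
      \<rho> \<ge> C * gam p n s \<longrightarrow>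
      real (min t0 (n - t0)) * (op_norm p (\<lambda>j k. \<Sigma>1 j k - \<Sigma>2 j k))\<^sup>2 / \<sigma> ^ 4
         \<ge> C * gam p n s \<longrightarrow>
      (\<integral>x. psi_test p n s \<sigma> lam x \<partial>P0) + (\<integral>x. 1 - psi_test p n s \<sigma> lam x \<partial>P) \<le> \<delta>"
  proof (intro allI impI)
    fix lam :: real and p n s :: nat and \<sigma> \<rho> C :: real and P0 P :: "data measure"
      and t0 :: nat and \<Sigma>1 \<Sigma>2 :: "nat \<Rightarrow> nat \<Rightarrow> real"
    assume lam: "lam \<ge> lam0" and p: "1 \<le> p" and n: "2 \<le> n" and s1: "1 \<le> s" and s2: "s \<le> p"
      and sg: "0 < \<sigma>" and P0: "class_P0 p n u \<sigma> P0" and P: "class_P1_wit p n s u \<sigma> \<rho> t0 \<Sigma>1 \<Sigma>2 P"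
      and C: "C \<ge> 8 * lam\<^sup>2" and rho: "\<rho> \<ge> C * gam p n s"
      and cond: "real (min t0 (n - t0)) * (op_norm p (\<lambda>j k. \<Sigma>1 j k - \<Sigma>2 j k))\<^sup>2 / \<sigma> ^ 4 \<ge> C * gam p n s"
    have l1: "lam \<ge> 1" and l2: "lam \<ge> 128 * u * A" using lam unfolding lam0_def by auto
    have "(\<integral>x. psi_test p n s \<sigma> lam x \<partial>P0) \<le> \<delta> / 2"
      by (rule null_bound[OF assms(1,2,3) A_def l2 p n s1 s2 sg P0])
    moreover have "(\<integral>x. 1 - psi_test p n s \<sigma> lam x \<partial>P) \<le> \<delta> / 2"
      by (rule alt_bound[OF assms(1,2,3) A_def l2 l1 p n s1 s2 sg P C rho cond])
    ultimately show "(\<integral>x. psi_test p n s \<sigma> lam x \<partial>P0) + (\<integral>x. 1 - psi_test p n s \<sigma> lam x \<partial>P) \<le> \<delta>"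
      by simp
  qed
  ultimately show ?thesis by blast
qed

end
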